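(* Let $\Omega\subset\mathbb{R}^2$ be a bounded domain and let $u,v\in C^{2}(\Omega)\cap C^{0}(\bar\Omega)$. For $w\in\{u,v\}$ let $S(w)=\{(x,y)\in\Omega: w_x-y=0,\ w_y+x=0\}$ and on $\Omega\setminus S(w)$ let $N(w)=(w_x-y,\,w_y+x)/\sqrt{(w_x-y)^2+(w_y+x)^2}$. Let $S=S(u)\cup S(v)$. Suppose $\operatorname{div}N(u)\ge\operatorname{div}N(v)$ in $\Omega\setminus S$, $u\le v$ on $\partial\Omega$, and $\mathcal{H}_1(\bar S)=0$, where $\mathcal{H}_1$ is the 1-dimensional Hausdorff measure. Then $u\le v$ in $\Omega$.
   Context: $\operatorname{div}$ denotes the Euclidean divergence in the $xy$-plane. *)

theory Defs
  imports "HOL-Analysis.Analysis"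
begin

definition px :: "(real \<times> real \<Rightarrow> real) \<Rightarrow> real \<times> real \<Rightarrow> real" where
  "px w p = deriv (\<lambda>t. w (t, snd p)) (fst p)"

definition py :: "(real \<times> real \<Rightarrow> real) \<Rightarrow> real \<times> real \<Rightarrow> real" where
  "py w p = deriv (\<lambda>t. w (fst p, t)) (snd p)"

definition C1_on :: "(real \<times> real) set \<Rightarrow> (real \<times> real \<Rightarrow> real) \<Rightarrow> bool" where
  "C1_on \<Omega> w \<longleftrightarrow>
     (\<forall>p\<in>\<Omega>. (\<lambda>t. w (t, snd p)) differentiable (at (fst p))
            \<and> (\<lambda>t. w (fst p, t)) differentiable (at (snd p)))
     \<and> continuous_on \<Omega> w \<and> continuous_on \<Omega> (px w) \<and> continuous_on \<Omega> (py w)"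

definition C2_on :: "(real \<times> real) set \<Rightarrow> (real \<times> real \<Rightarrow> real) \<Rightarrow> bool" where
  "C2_on \<Omega> w \<longleftrightarrow> C1_on \<Omega> w \<and> C1_on \<Omega> (px w) \<and> C1_on \<Omega> (py w)"

definition div2 :: "(real \<times> real \<Rightarrow> real \<times> real) \<Rightarrow> real \<times> real \<Rightarrow> real" where
  "div2 F p = px (\<lambda>q. fst (F q)) p + py (\<lambda>q. snd (F q)) p"

definition Sing :: "(real \<times> real) set \<Rightarrow> (real \<times> real \<Rightarrow> real) \<Rightarrow> (real \<times> real) set" where
  "Sing \<Omega> w = {p \<in> \<Omega>. px w p - snd p = 0 \<and> py w p + fst p = 0}"

definition Nfield :: "(real \<times> real \<Rightarrow> real) \<Rightarrow> real \<times> real \<Rightarrow> real \<times> real" where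
  "Nfield w p = (let a = px w p - snd p; b = py w p + fst p; r = sqrt (a\<^sup>2 + b\<^sup>2)
                 in (a / r, b / r))"

text \<open>One-dimensional Hausdorff measure (normalised so that it equals the sum of diameters):
  H^1(A) = sup_{\<delta>>0} inf { \<Sum> diam C_i : A \<subseteq> \<Union> C_i, diam C_i \<le> \<delta> }.\<close>
definition hausdorff_pre1 :: "real \<Rightarrow> (real \<times> real) set \<Rightarrow> ennreal" where
  "hausdorff_pre1 \<delta> A =
     (INF C \<in> {C :: nat \<Rightarrow> (real \<times> real) set.
                 A \<subseteq> (\<Union>i. C i) \<and> (\<forall>i. bounded (C i) \<and> diameter (C i) \<le> \<delta>)}.
        (\<Sum>i. ennreal (diameter (C i))))"

definition hausdorff1 :: "(real \<times> real) set \<Rightarrow> ennreal" where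
  "hausdorff1 A = (SUP \<delta> \<in> {0<..}. hausdorff_pre1 \<delta> A)"

end

theory Submission imports Defs begin


definition hpx :: "(real \<times> real \<Rightarrow> real) \<Rightarrow> real \<Rightarrow> real \<times> real \<Rightarrow> bool" where
  "hpx f d p \<longleftrightarrow> ((\<lambda>t. f (t, snd p)) has_real_derivative d) (at (fst p))"
definition hpy :: "(real \<times> real \<Rightarrow> real) \<Rightarrow> real \<Rightarrow> real \<times> real \<Rightarrow> bool" where
  "hpy f d p \<longleftrightarrow> ((\<lambda>t. f (fst p, t)) has_real_derivative d) (at (snd p))"

lemma hpx_px: "hpx f d p \<Longrightarrow> px f p = d"
  unfolding hpx_def px_def by (rule DERIV_imp_deriv)
lemma hpy_py: "hpy f d p \<Longrightarrow> py f p = d"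
  unfolding hpy_def py_def by (rule DERIV_imp_deriv)

lemma C1_hpx: "C1_on \<Omega> w \<Longrightarrow> p \<in> \<Omega> \<Longrightarrow> hpx w (px w p) p"
  unfolding C1_on_def hpx_def px_def
  using DERIV_deriv_iff_real_differentiable by blast
lemma C1_hpy: "C1_on \<Omega> w \<Longrightarrow> p \<in> \<Omega> \<Longrightarrow> hpy w (py w p) p"
  unfolding C1_on_def hpy_def py_def
  using DERIV_deriv_iff_real_differentiable by blast

lemma C1_hpx': "C1_on \<Omega> w \<Longrightarrow> (x, y) \<in> \<Omega> \<Longrightarrow> ((\<lambda>t. w (t, y)) has_real_derivative (px w (x,y))) (at x)"
  using C1_hpx[of \<Omega> w "(x,y)"] by (simp add: hpx_def)
lemma C1_hpy': "C1_on \<Omega> w \<Longrightarrow> (x, y) \<in> \<Omega> \<Longrightarrow> ((\<lambda>t. w (x, t)) has_real_derivative (py w (x,y))) (at y)"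
  using C1_hpy[of \<Omega> w "(x,y)"] by (simp add: hpy_def)

lemma C1_cont: "C1_on \<Omega> w \<Longrightarrow> continuous_on \<Omega> w" "C1_on \<Omega> w \<Longrightarrow> continuous_on \<Omega> (px w)"
  "C1_on \<Omega> w \<Longrightarrow> continuous_on \<Omega> (py w)"
  unfolding C1_on_def by auto

lemma hpx_zero:
  assumes "open V" "p \<in> V" "\<forall>q\<in>V. H q = 0"
  shows "hpx H 0 p"
proof -
  have ev: "\<forall>\<^sub>F t in nhds (fst p). (t, snd p) \<in> V"
  proof -
    obtain e where e: "e > 0" "ball p e \<subseteq> V" using assms open_contains_ball by blast
    have "\<forall>\<^sub>F t in nhds (fst p). dist t (fst p) < e" using e(1) eventually_nhds_metric by blast
    then show ?thesis
      by eventually_elim (use e in \<open>cases p; auto simp: dist_Pair_Pair dist_commute subset_iff\<close>)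
  qed
  have "((\<lambda>t. 0::real) has_real_derivative 0) (at (fst p))" by simp
  moreover have "\<forall>\<^sub>F t in nhds (fst p). H (t, snd p) = 0"
    using ev by eventually_elim (use assms in auto)
  ultimately show ?thesis unfolding hpx_def
    using DERIV_cong_ev[of "fst p" "fst p" "\<lambda>t. H (t, snd p)" "\<lambda>t. 0" 0 0] by auto
qed

lemma hpy_zero:
  assumes "open V" "p \<in> V" "\<forall>q\<in>V. H q = 0"
  shows "hpy H 0 p"
proof -
  have ev: "\<forall>\<^sub>F t in nhds (snd p). (fst p, t) \<in> V"
  proof -
    obtain e where e: "e > 0" "ball p e \<subseteq> V" using assms open_contains_ball by blast
    have "\<forall>\<^sub>F t in nhds (snd p). dist t (snd p) < e" using e(1) eventually_nhds_metric by blast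
    then show ?thesis
      by eventually_elim (use e in \<open>cases p; auto simp: dist_Pair_Pair dist_commute subset_iff\<close>)
  qed
  have "((\<lambda>t. 0::real) has_real_derivative 0) (at (snd p))" by simp
  moreover have "\<forall>\<^sub>F t in nhds (snd p). H (fst p, t) = 0"
    using ev by eventually_elim (use assms in auto)
  ultimately show ?thesis unfolding hpy_def
    using DERIV_cong_ev[of "snd p" "snd p" "\<lambda>t. H (fst p, t)" "\<lambda>t. 0" 0 0] by auto
qed

lemma glue_cont:
  fixes f :: "real \<times> real \<Rightarrow> real"
  assumes "open U" "open V" "U \<union> V = UNIV" "continuous_on U f" "\<forall>p\<in>V. f p = 0"
  shows "continuous_on UNIV f"
proof -
  have "continuous_on V f" using continuous_on_cong[of V V f "\<lambda>_. 0"] assms by auto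
  then show ?thesis using continuous_on_open_Un[of U V f] assms by auto
qed

lemma glue_hpx:
  assumes "open U" "open V" "U \<union> V = UNIV" "\<forall>p\<in>V. H p = 0"
    "\<forall>p\<in>U. hpx H (Hx p) p" "continuous_on U Hx"
  shows "\<forall>p. hpx H (if p \<in> U then Hx p else 0) p"
    "continuous_on UNIV (\<lambda>p. if p \<in> U then Hx p else 0)"
proof -
  have z: "Hx p = 0" if "p \<in> U" "p \<in> V" for p
    using hpx_zero[OF assms(2) that(2) assms(4)] assms(5) that(1) unfolding hpx_def
    using DERIV_unique by blast
  show "\<forall>p. hpx H (if p \<in> U then Hx p else 0) p"
    using assms hpx_zero[OF assms(2) _ assms(4)] by auto
  show "continuous_on UNIV (\<lambda>p. if p \<in> U then Hx p else 0)"
    by (rule glue_cont[OF assms(1-3)])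
      (use z assms(6) in \<open>auto intro: continuous_on_cong[THEN iffD1, OF refl _ assms(6)]\<close>)
qed

lemma glue_hpy:
  assumes "open U" "open V" "U \<union> V = UNIV" "\<forall>p\<in>V. H p = 0"
    "\<forall>p\<in>U. hpy H (Hy p) p" "continuous_on U Hy"
  shows "\<forall>p. hpy H (if p \<in> U then Hy p else 0) p"
    "continuous_on UNIV (\<lambda>p. if p \<in> U then Hy p else 0)"
proof -
  have z: "Hy p = 0" if "p \<in> U" "p \<in> V" for p
    using hpy_zero[OF assms(2) that(2) assms(4)] assms(5) that(1) unfolding hpy_def
    using DERIV_unique by blast
  show "\<forall>p. hpy H (if p \<in> U then Hy p else 0) p"
    using assms hpy_zero[OF assms(2) _ assms(4)] by auto
  show "continuous_on UNIV (\<lambda>p. if p \<in> U then Hy p else 0)"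
    by (rule glue_cont[OF assms(1-3)])
      (use z assms(6) in \<open>auto intro: continuous_on_cong[THEN iffD1, OF refl _ assms(6)]\<close>)
qed



lemma ftc_real:
  fixes f f' :: "real \<Rightarrow> real"
  assumes "a \<le> b" "\<And>x. x \<in> {a..b} \<Longrightarrow> (f has_real_derivative f' x) (at x)"
  shows "(f' has_integral (f b - f a)) {a..b}"
  apply (rule fundamental_theorem_of_calculus[OF assms(1)])
  using assms(2) has_real_derivative_iff_has_vector_derivative has_vector_derivative_at_within by blast

lemma ftc_real_int:
  fixes f f' :: "real \<Rightarrow> real"
  assumes "a \<le> b" "\<And>x. x \<in> {a..b} \<Longrightarrow> (f has_real_derivative f' x) (at x)"
  shows "integral {a..b} f' = f b - f a"
  using ftc_real[OF assms] by (rule integral_unique)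

lemma int_px_zero:
  fixes H Hx :: "real \<times> real \<Rightarrow> real"
  assumes d: "\<forall>p. hpx H (Hx p) p" and c: "continuous_on UNIV Hx"
    and z: "\<And>y. H (L, y) = 0" "\<And>y. H (-L, y) = 0" and L: "L \<ge> 0"
  shows "integral (cbox (-L,-L) (L,L)) Hx = 0"
proof -
  have c2: "continuous_on (cbox (-L, -L) (L, L)) (\<lambda>(x, y). Hx (x, y))"
    using c by (auto intro: continuous_on_subset)
  have "integral (cbox (-L,-L) (L,L)) Hx = integral (cbox (-L) L) (\<lambda>x. integral (cbox (-L) L) (\<lambda>y. Hx (x,y)))"
    by (rule integral_prod_continuous) (use c in \<open>auto intro: continuous_on_subset\<close>)
  also have "\<dots> = integral (cbox (-L) L) (\<lambda>y. integral (cbox (-L) L) (\<lambda>x. Hx (x,y)))"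
    using integral_swap_continuous[of "-L" "-L" L L "\<lambda>x y. Hx (x,y)"] c2 by simp
  also have "\<dots> = integral (cbox (-L) L) (\<lambda>y. 0::real)"
  proof (rule integral_cong)
    fix y :: real
    have "integral {-L..L} (\<lambda>x. Hx (x,y)) = H (L, y) - H (-L, y)"
      by (rule ftc_real_int[of _ _ "\<lambda>t. H (t,y)"]) (use L d in \<open>auto simp: hpx_def\<close>)
    then show "integral (cbox (-L) L) (\<lambda>x. Hx (x,y)) = 0" using z by simp
  qed
  finally show ?thesis by simp
qed

lemma int_py_zero:
  fixes H Hy :: "real \<times> real \<Rightarrow> real"
  assumes d: "\<forall>p. hpy H (Hy p) p" and c: "continuous_on UNIV Hy"
    and z: "\<And>x. H (x, L) = 0" "\<And>x. H (x, -L) = 0" and L: "L \<ge> 0"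
  shows "integral (cbox (-L,-L) (L,L)) Hy = 0"
proof -
  have "integral (cbox (-L,-L) (L,L)) Hy = integral (cbox (-L) L) (\<lambda>x. integral (cbox (-L) L) (\<lambda>y. Hy (x,y)))"
    by (rule integral_prod_continuous) (use c in \<open>auto intro: continuous_on_subset\<close>)
  also have "\<dots> = integral (cbox (-L) L) (\<lambda>x. 0::real)"
  proof (rule integral_cong)
    fix x :: real
    have "integral {-L..L} (\<lambda>y. Hy (x,y)) = H (x, L) - H (x, -L)"
      by (rule ftc_real_int[of _ _ "\<lambda>t. H (x,t)"]) (use L d in \<open>auto simp: hpy_def\<close>)
    then show "integral (cbox (-L) L) (\<lambda>y. Hy (x,y)) = 0" using z by simp
  qed
  finally show ?thesis by simp
qed

lemma box_int_mixed:
  assumes u: "C2_on \<Omega> u" and sub: "cbox (a,c) (b,d) \<subseteq> \<Omega>" and ab: "a \<le> b" "c \<le> d"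
  shows "integral (cbox (a,c) (b,d)) (px (py u)) = integral (cbox (a,c) (b,d)) (py (px u))"
proof -
  have C1: "C1_on \<Omega> u" "C1_on \<Omega> (px u)" "C1_on \<Omega> (py u)" using u unfolding C2_on_def by auto
  have in\<Omega>: "(x,y) \<in> \<Omega>" if "x \<in> {a..b}" "y \<in> {c..d}" for x y
    using sub that by (auto simp: cbox_Pair_iff subset_iff)
  have cpy: "continuous_on (cbox (a, c) (b, d)) (px (py u))" "continuous_on (cbox (a, c) (b, d)) (py (px u))"
    using C1_cont[OF C1(3)] C1_cont[OF C1(2)] sub by (auto intro: continuous_on_subset)
  have cy: "continuous_on {c..d} (\<lambda>y. py u (x, y))" if "x \<in> {a..b}" for x
    using C1_cont(3)[OF C1(1)] in\<Omega>[OF that]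
    by (intro continuous_on_compose2[of \<Omega> "py u" _ "\<lambda>y. (x,y)"]) (auto intro!: continuous_intros)
  have cx: "continuous_on {a..b} (\<lambda>x. px u (x, y))" if "y \<in> {c..d}" for y
    using C1_cont(2)[OF C1(1)] in\<Omega>[OF _ that]
    by (intro continuous_on_compose2[of \<Omega> "px u" _ "\<lambda>x. (x,y)"]) (auto intro!: continuous_intros)
  have "integral (cbox (a,c) (b,d)) (px (py u)) = integral (cbox a b) (\<lambda>x. integral (cbox c d) (\<lambda>y. px (py u) (x,y)))"
    by (rule integral_prod_continuous[OF cpy(1)])
  also have "\<dots> = integral (cbox c d) (\<lambda>y. integral (cbox a b) (\<lambda>x. px (py u) (x,y)))"
    using integral_swap_continuous[of a c b d "\<lambda>x y. px (py u) (x,y)"] cpy(1) by simp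
  also have "\<dots> = integral {c..d} (\<lambda>y. py u (b, y) - py u (a, y))"
    unfolding cbox_interval
  proof (rule integral_cong)
    fix y assume y: "y \<in> {c..d}"
    show "integral {a..b} (\<lambda>x. px (py u) (x,y)) = py u (b, y) - py u (a, y)"
      by (rule ftc_real_int[of a b "\<lambda>x. py u (x,y)"], rule ab) (rule C1_hpx'[OF C1(3) in\<Omega>[OF _ y]])
  qed
  also have "\<dots> = integral {c..d} (\<lambda>y. py u (b, y)) - integral {c..d} (\<lambda>y. py u (a, y))"
    by (rule integral_diff) (use ab cy in \<open>auto intro!: integrable_continuous_real\<close>)
  also have "\<dots> = (u (b,d) - u (b,c)) - (u (a,d) - u (a,c))"
    using ftc_real_int[of c d "\<lambda>y. u (b,y)"] ftc_real_int[of c d "\<lambda>y. u (a,y)"] ab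
      C1_hpy'[OF C1(1) in\<Omega>] by simp
  finally have 1: "integral (cbox (a,c) (b,d)) (px (py u)) = (u (b,d) - u (b,c)) - (u (a,d) - u (a,c))" .
  have "integral (cbox (a,c) (b,d)) (py (px u)) = integral (cbox a b) (\<lambda>x. integral (cbox c d) (\<lambda>y. py (px u) (x,y)))"
    by (rule integral_prod_continuous[OF cpy(2)])
  also have "\<dots> = integral {a..b} (\<lambda>x. px u (x, d) - px u (x, c))"
    unfolding cbox_interval
  proof (rule integral_cong)
    fix x assume x: "x \<in> {a..b}"
    show "integral {c..d} (\<lambda>y. py (px u) (x,y)) = px u (x, d) - px u (x, c)"
      by (rule ftc_real_int[of c d "\<lambda>y. px u (x,y)"], rule ab) (rule C1_hpy'[OF C1(2) in\<Omega>[OF x]])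
  qed
  also have "\<dots> = integral {a..b} (\<lambda>x. px u (x, d)) - integral {a..b} (\<lambda>x. px u (x, c))"
    by (rule integral_diff) (use ab cx in \<open>auto intro!: integrable_continuous_real\<close>)
  also have "\<dots> = (u (b,d) - u (a,d)) - (u (b,c) - u (a,c))"
    using ftc_real_int[of a b "\<lambda>x. u (x,d)"] ftc_real_int[of a b "\<lambda>x. u (x,c)"] ab
      C1_hpx'[OF C1(1) in\<Omega>] by simp
  finally show ?thesis using 1 by simp
qed

lemma zero_from_box_integrals:
  fixes f :: "real \<times> real \<Rightarrow> real"
  assumes "open \<Omega>" "continuous_on \<Omega> f" "p \<in> \<Omega>"
    and I: "\<And>a b c d. cbox (a,c) (b,d) \<subseteq> \<Omega> \<Longrightarrow> a < b \<Longrightarrow> c < d \<Longrightarrow> integral (cbox (a,c) (b,d)) f = 0"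
  shows "f p = 0"
proof (rule ccontr)
  assume ne: "f p \<noteq> 0"
  define g where "g = (\<lambda>q. if f p > 0 then f q else - f q)"
  have gp: "g p > 0" using ne by (auto simp: g_def)
  have gc: "continuous_on \<Omega> g" using assms(2) by (cases "f p > 0") (auto simp: g_def intro!: continuous_intros)
  then have "continuous (at p) g" using assms(1,3) continuous_on_eq_continuous_at by blast
  then have "(g \<longlongrightarrow> g p) (at p)" by (simp add: continuous_at)
  then have "\<forall>\<^sub>F q in at p. g q > 0" using order_tendstoD(1)[of g "g p" "at p" 0] gp by blast
  then obtain e where e0: "e > 0" "\<forall>q. q \<noteq> p \<and> dist q p < e \<longrightarrow> g q > 0"
    unfolding eventually_at by (auto simp: dist_commute)
  then have e: "e > 0" "\<forall>q. dist q p < e \<longrightarrow> g q > 0" using gp by metis+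
  obtain e2 where e2: "e2 > 0" "ball p e2 \<subseteq> \<Omega>" using assms(1,3) open_contains_ball by blast
  define h where "h = min e e2 / 2"
  have h: "h > 0" "h < e" "h < e2" using e e2 by (auto simp: h_def)
  obtain x y where p: "p = (x,y)" by (cases p)
  let ?B = "cbox (x - h/2, y - h/2) (x + h/2, y + h/2)"
  have inB: "dist q p \<le> h" if "q \<in> ?B" for q
  proof -
    obtain q1 q2 where q: "q = (q1,q2)" by (cases q)
    have "\<bar>q1 - x\<bar> \<le> h/2" "\<bar>q2 - y\<bar> \<le> h/2" unfolding abs_le_iff using that by (auto simp: q cbox_Pair_iff)
    moreover have "sqrt ((q1-x)^2 + (q2-y)^2) \<le> \<bar>q1-x\<bar> + \<bar>q2-y\<bar>" by (rule sqrt_sum_squares_le_sum_abs)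
    ultimately have "sqrt ((q1-x)^2 + (q2-y)^2) \<le> h" using h(1) by linarith
    then show ?thesis by (simp add: q p dist_Pair_Pair dist_real_def)
  qed
  have sub: "?B \<subseteq> \<Omega>" using inB h e2 by (force simp: dist_commute subset_iff)
  have gB: "continuous_on ?B g" using gc sub continuous_on_subset by blast
  have Ig: "integral ?B g = 0"
  proof -
    have "integral ?B f = 0" by (rule I[OF sub]) (use h in auto)
    then show ?thesis by (cases "f p > 0") (auto simp: g_def integral_neg)
  qed
  have "g p = 0"
  proof (rule has_integral_0_cbox_imp_0[OF gB])
    show "\<And>q. q \<in> box (x - h / 2, y - h / 2) (x + h / 2, y + h / 2) \<Longrightarrow> 0 \<le> g q"
    proof -
      fix q assume "q \<in> box (x - h / 2, y - h / 2) (x + h / 2, y + h / 2)"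
      then have "q \<in> ?B" using box_subset_cbox by blast
      then have "dist q p < e" using inB[of q] h by linarith
      then show "0 \<le> g q" using e(2) less_imp_le by blast
    qed
    show "(g has_integral 0) ?B" using Ig integrable_continuous[OF gB] by (metis has_integral_integral)
    have "(x,y) \<in> box (x - h / 2, y - h / 2) (x + h / 2, y + h / 2)" using h by (auto simp: mem_box Basis_prod_def inner_Pair)
    then show "box (x - h / 2, y - h / 2) (x + h / 2, y + h / 2) \<noteq> {}" by blast
    show "p \<in> ?B" using h by (auto simp: p cbox_Pair_iff)
  qed
  then show False using gp by simp
qed

lemma schwarz:
  assumes "open \<Omega>" "C2_on \<Omega> u" "p \<in> \<Omega>"
  shows "px (py u) p = py (px u) p"
proof -
  have C1: "C1_on \<Omega> (px u)" "C1_on \<Omega> (py u)" using assms(2) unfolding C2_on_def by auto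
  have "(\<lambda>q. px (py u) q - py (px u) q) p = 0"
  proof (rule zero_from_box_integrals[OF assms(1) _ assms(3)])
    show "continuous_on \<Omega> (\<lambda>q. px (py u) q - py (px u) q)"
      using C1_cont[OF C1(1)] C1_cont[OF C1(2)] by (auto intro!: continuous_intros)
    fix a b c d :: real assume s: "cbox (a, c) (b, d) \<subseteq> \<Omega>" "a < b" "c < d"
    have cc: "continuous_on (cbox (a, c) (b, d)) (px (py u))" "continuous_on (cbox (a, c) (b, d)) (py (px u))"
      using C1_cont[OF C1(1)] C1_cont[OF C1(2)] s(1) by (auto intro: continuous_on_subset)
    show "integral (cbox (a, c) (b, d)) (\<lambda>q. px (py u) q - py (px u) q) = 0"
      using box_int_mixed[OF assms(2) s(1)] s integral_diff[OF integrable_continuous[OF cc(1)] integrable_continuous[OF cc(2)]]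
      by simp
  qed
  then show ?thesis by simp
qed



definition mq :: "real \<Rightarrow> real" where "mq t = (max t 0)^2"

lemma DERIV_mq: "(mq has_real_derivative (2 * max t 0)) (at t)"
proof (cases "t = 0")
  case True
  have "\<forall>z. mq z - mq 0 = max z 0 * (z - 0)" by (auto simp: mq_def power2_eq_square max_def)
  moreover have "isCont (\<lambda>z. max z (0::real)) 0" by (intro continuous_intros)
  ultimately show ?thesis using True CARAT_DERIV[of mq 0 0] by auto
next
  case False
  show ?thesis
  proof (cases "t > 0")
    case True
    have "\<forall>\<^sub>F z in nhds t. z > 0" using True eventually_nhds_in_open[of "{0<..}" t] by auto
    then have ev: "\<forall>\<^sub>F z in nhds t. mq z = z^2" by eventually_elim (auto simp: mq_def)
    have "((\<lambda>z. z^2) has_real_derivative 2 * t) (at t)" by (auto intro!: derivative_eq_intros)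
    then show ?thesis using DERIV_cong_ev[OF refl ev, of "2*t" "2*max t 0"] True by auto
  next
    case f2: False
    then have "t < 0" using False by auto
    then have "\<forall>\<^sub>F z in nhds t. z < 0" using eventually_nhds_in_open[of "{..<0}" t] by auto
    then have ev: "\<forall>\<^sub>F z in nhds t. mq z = 0" by eventually_elim (auto simp: mq_def)
    have "((\<lambda>z. 0::real) has_real_derivative 0) (at t)" by auto
    then show ?thesis using DERIV_cong_ev[OF refl ev, of "0" "2*max t 0"] \<open>t<0\<close> by auto
  qed
qed

lemma DERIV_mq_chain[derivative_intros]:
  "(f has_real_derivative f') (at x within s) \<Longrightarrow>
   ((\<lambda>x. mq (f x)) has_real_derivative (2 * max (f x) 0 * f')) (at x within s)"
  using DERIV_chain2[OF DERIV_mq] by blast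

lemma mq_nonneg: "mq t \<ge> 0" by (simp add: mq_def)
lemma mq_zero: "t \<le> 0 \<Longrightarrow> mq t = 0" by (simp add: mq_def)
lemma mq_pos: "t > 0 \<Longrightarrow> mq t > 0" by (simp add: mq_def)
lemma continuous_mq[continuous_intros]: "continuous_on s f \<Longrightarrow> continuous_on s (\<lambda>x. mq (f x))"
  unfolding mq_def by (intro continuous_intros)

definition stp :: "real \<Rightarrow> real" where "stp s = mq s / (mq s + mq (1 - s))"
definition dstp :: "real \<Rightarrow> real" where
  "dstp s = (2 * max s 0 * (mq s + mq (1 - s)) - mq s * (2 * max s 0 - 2 * max (1 - s) 0)) / (mq s + mq (1 - s))^2"

lemma stp_den_pos: "mq s + mq (1 - s) > 0"
  by (cases "s > 0") (auto simp: mq_def intro: add_pos_nonneg add_nonneg_pos)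

lemma DERIV_stp: "(stp has_real_derivative dstp s) (at s)"
proof -
  have D: "mq s + mq (1 - s) \<noteq> 0" using stp_den_pos[of s] by auto
  have "((\<lambda>s. mq s / (mq s + mq (1 - s))) has_real_derivative dstp s) (at s)"
    apply (rule derivative_eq_intros refl | simp add: D)+
    using D by (simp add: dstp_def field_simps power2_eq_square)
  then show ?thesis unfolding stp_def[abs_def] .
qed

lemma DERIV_stp_chain[derivative_intros]:
  "(f has_real_derivative f') (at x within s) \<Longrightarrow>
   ((\<lambda>x. stp (f x)) has_real_derivative (dstp (f x) * f')) (at x within s)"
  using DERIV_chain2[OF DERIV_stp] by blast

lemma continuous_dstp: "continuous_on UNIV dstp"
proof -
  have "\<forall>s. mq s + mq (1 - s) \<noteq> 0" using stp_den_pos by (metis less_irrefl)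
  then show ?thesis unfolding dstp_def by (intro continuous_intros) auto
qed

lemma continuous_stp: "continuous_on UNIV stp"
proof -
  have "\<forall>s. mq s + mq (1 - s) \<noteq> 0" using stp_den_pos by (metis less_irrefl)
  then show ?thesis unfolding stp_def[abs_def] by (intro continuous_intros) auto
qed

lemma dstp_zero: "s \<le> 0 \<or> s \<ge> 1 \<Longrightarrow> dstp s = 0"
  by (auto simp: dstp_def mq_def max_def)

lemma stp_0: "s \<le> 0 \<Longrightarrow> stp s = 0" by (simp add: stp_def mq_zero)
lemma stp_1: "s \<ge> 1 \<Longrightarrow> stp s = 1"
  using stp_den_pos[of s] by (simp add: stp_def mq_zero)
lemma stp_range: "0 \<le> stp s" "stp s \<le> 1"
  using stp_den_pos[of s] mq_nonneg[of s] mq_nonneg[of "1-s"] by (auto simp: stp_def)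

lemma dstp_bound: "\<exists>C>0. \<forall>s. \<bar>dstp s\<bar> \<le> C"
proof -
  have "compact (dstp ` {0..1})"
    by (rule compact_continuous_image) (use continuous_dstp in \<open>auto intro: continuous_on_subset\<close>)
  then obtain B where B: "\<forall>x\<in>dstp ` {0..1}. norm x \<le> B" using compact_imp_bounded bounded_iff by blast
  show ?thesis
  proof (intro exI[of _ "max B 1"] conjI allI)
    fix s
    show "\<bar>dstp s\<bar> \<le> max B 1"
      using B dstp_zero[of s] by (cases "s \<le> 0 \<or> s \<ge> 1") (auto, smt (verit) atLeastAtMost_iff)
  qed auto
qed



lemma DERIV_normc:
  fixes f g :: "real \<Rightarrow> real"
  assumes f: "(f has_real_derivative f') (at x)" and g: "(g has_real_derivative g') (at x)"
    and nz: "f x^2 + g x^2 \<noteq> 0"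
  shows "((\<lambda>t. f t / sqrt (f t^2 + g t^2)) has_real_derivative
     (f' / sqrt (f x^2 + g x^2) - f x * (f x * f' + g x * g') / sqrt (f x^2 + g x^2)^3)) (at x)"
proof -
  have "f x^2 + g x^2 \<ge> 0" by simp
  then have pos: "f x^2 + g x^2 > 0" using nz by linarith
  define r where "r = sqrt (f x^2 + g x^2)"
  have r: "r > 0" "r^2 = f x^2 + g x^2" using pos by (auto simp: r_def)
  have q: "((\<lambda>t. f t^2 + g t^2) has_real_derivative (2 * f x * f' + 2 * g x * g')) (at x)"
    using f g by (auto intro!: derivative_eq_intros)
  have s: "((\<lambda>t. sqrt (f t^2 + g t^2)) has_real_derivative (inverse (sqrt (f x^2 + g x^2)) / 2 * (2 * f x * f' + 2 * g x * g'))) (at x)"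
    using DERIV_chain2[OF DERIV_real_sqrt[OF pos] q] .
  have "((\<lambda>t. f t / sqrt (f t^2 + g t^2)) has_real_derivative
     (f' * sqrt (f x^2 + g x^2) - f x * (inverse (sqrt (f x^2 + g x^2)) / 2 * (2 * f x * f' + 2 * g x * g'))) / (sqrt (f x^2 + g x^2) * sqrt (f x^2 + g x^2))) (at x)"
    by (rule DERIV_divide[OF f s]) (use r in auto)
  moreover have "(f' * sqrt (f x^2 + g x^2) - f x * (inverse (sqrt (f x^2 + g x^2)) / 2 * (2 * f x * f' + 2 * g x * g'))) / (sqrt (f x^2 + g x^2) * sqrt (f x^2 + g x^2))
     = f' / sqrt (f x^2 + g x^2) - f x * (f x * f' + g x * g') / sqrt (f x^2 + g x^2)^3"
    unfolding r_def[symmetric] using r(1) by (simp add: field_simps power3_eq_cube)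
  ultimately show ?thesis by simp
qed

definition Aw :: "(real \<times> real \<Rightarrow> real) \<Rightarrow> real \<times> real \<Rightarrow> real" where "Aw w p = px w p - snd p"
definition Bw :: "(real \<times> real \<Rightarrow> real) \<Rightarrow> real \<times> real \<Rightarrow> real" where "Bw w p = py w p + fst p"

definition nx :: "(real \<times> real \<Rightarrow> real) \<Rightarrow> real \<times> real \<Rightarrow> real" where
  "nx w p = (let a = Aw w p; b = Bw w p; a' = px (px w) p; b' = px (py w) p + 1; r = sqrt (a^2 + b^2)
     in a' / r - a * (a * a' + b * b') / r^3)"
definition ny :: "(real \<times> real \<Rightarrow> real) \<Rightarrow> real \<times> real \<Rightarrow> real" where
  "ny w p = (let a = Aw w p; b = Bw w p; a' = py (px w) p - 1; b' = py (py w) p; r = sqrt (a^2 + b^2)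
     in b' / r - b * (b * b' + a * a') / r^3)"

lemma Nfield_fst: "fst (Nfield w p) = Aw w p / sqrt (Aw w p ^2 + Bw w p ^2)"
  by (simp add: Nfield_def Aw_def Bw_def Let_def)
lemma Nfield_snd: "snd (Nfield w p) = Bw w p / sqrt (Bw w p ^2 + Aw w p ^2)"
  by (simp add: Nfield_def Aw_def Bw_def Let_def add.commute)

lemma Sing_iff: "p \<in> Sing \<Omega> w \<longleftrightarrow> p \<in> \<Omega> \<and> Aw w p = 0 \<and> Bw w p = 0"
  by (simp add: Sing_def Aw_def Bw_def)

lemma nonsing_pos: "p \<in> \<Omega> \<Longrightarrow> p \<notin> Sing \<Omega> w \<Longrightarrow> Aw w p ^2 + Bw w p ^2 > 0"
  unfolding Sing_iff by (simp add: sum_power2_gt_zero_iff)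

lemma N_hpx:
  assumes w: "C2_on \<Omega> w" and p: "p \<in> \<Omega>" "p \<notin> Sing \<Omega> w"
  shows "hpx (\<lambda>q. fst (Nfield w q)) (nx w p) p"
proof -
  obtain x y where xy: "p = (x,y)" by (cases p)
  have C1: "C1_on \<Omega> (px w)" "C1_on \<Omega> (py w)" using w by (auto simp: C2_on_def)
  have f: "((\<lambda>t. Aw w (t,y)) has_real_derivative px (px w) (x,y)) (at x)"
    unfolding Aw_def using C1_hpx'[OF C1(1), of x y] p xy by (auto intro!: derivative_eq_intros)
  have g: "((\<lambda>t. Bw w (t,y)) has_real_derivative px (py w) (x,y) + 1) (at x)"
    unfolding Bw_def using C1_hpx'[OF C1(2), of x y] p xy by (auto intro!: derivative_eq_intros)
  have "Aw w (x,y) ^2 + Bw w (x,y) ^2 > 0" using nonsing_pos[OF p] xy by simp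
  then have nz: "Aw w (x,y) ^2 + Bw w (x,y) ^2 \<noteq> 0" by linarith
  show ?thesis
    unfolding hpx_def Nfield_fst xy using DERIV_normc[OF f g nz] by (simp add: nx_def Let_def)
qed

lemma N_hpy:
  assumes w: "C2_on \<Omega> w" and p: "p \<in> \<Omega>" "p \<notin> Sing \<Omega> w"
  shows "hpy (\<lambda>q. snd (Nfield w q)) (ny w p) p"
proof -
  obtain x y where xy: "p = (x,y)" by (cases p)
  have C1: "C1_on \<Omega> (px w)" "C1_on \<Omega> (py w)" using w by (auto simp: C2_on_def)
  have f: "((\<lambda>t. Aw w (x,t)) has_real_derivative py (px w) (x,y) - 1) (at y)"
    unfolding Aw_def using C1_hpy'[OF C1(1), of x y] p xy by (auto intro!: derivative_eq_intros)
  have g: "((\<lambda>t. Bw w (x,t)) has_real_derivative py (py w) (x,y)) (at y)"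
    unfolding Bw_def using C1_hpy'[OF C1(2), of x y] p xy by (auto intro!: derivative_eq_intros)
  have "Aw w (x,y) ^2 + Bw w (x,y) ^2 > 0" using nonsing_pos[OF p] xy by simp
  then have nz: "Bw w (x,y) ^2 + Aw w (x,y) ^2 \<noteq> 0" by linarith
  show ?thesis
    unfolding hpy_def Nfield_snd xy using DERIV_normc[OF g f nz] by (simp add: ny_def Let_def add.commute)
qed

lemma Aw_cont: "C2_on \<Omega> w \<Longrightarrow> continuous_on \<Omega> (Aw w)"
  unfolding Aw_def[abs_def] C2_on_def C1_on_def by (auto intro!: continuous_intros)
lemma Bw_cont: "C2_on \<Omega> w \<Longrightarrow> continuous_on \<Omega> (Bw w)"
  unfolding Bw_def[abs_def] C2_on_def C1_on_def by (auto intro!: continuous_intros)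

lemma nx_cont: assumes "C2_on \<Omega> w" shows "continuous_on (\<Omega> - Sing \<Omega> w) (nx w)"
proof -
  have c: "continuous_on (\<Omega> - Sing \<Omega> w) (Aw w)" "continuous_on (\<Omega> - Sing \<Omega> w) (Bw w)"
    "continuous_on (\<Omega> - Sing \<Omega> w) (px (px w))" "continuous_on (\<Omega> - Sing \<Omega> w) (px (py w))"
    using Aw_cont[OF assms] Bw_cont[OF assms] assms unfolding C2_on_def C1_on_def
    by (auto intro: continuous_on_subset)
  have nz: "\<forall>p\<in>\<Omega> - Sing \<Omega> w. sqrt (Aw w p ^2 + Bw w p ^2) \<noteq> 0"
    using nonsing_pos by fastforce
  show ?thesis unfolding nx_def[abs_def] Let_def
    by (intro continuous_intros c) (use nz in auto)
qed

lemma ny_cont: assumes "C2_on \<Omega> w" shows "continuous_on (\<Omega> - Sing \<Omega> w) (ny w)"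
proof -
  have c: "continuous_on (\<Omega> - Sing \<Omega> w) (Aw w)" "continuous_on (\<Omega> - Sing \<Omega> w) (Bw w)"
    "continuous_on (\<Omega> - Sing \<Omega> w) (py (px w))" "continuous_on (\<Omega> - Sing \<Omega> w) (py (py w))"
    using Aw_cont[OF assms] Bw_cont[OF assms] assms unfolding C2_on_def C1_on_def
    by (auto intro: continuous_on_subset)
  have nz: "\<forall>p\<in>\<Omega> - Sing \<Omega> w. sqrt (Aw w p ^2 + Bw w p ^2) \<noteq> 0"
    using nonsing_pos by fastforce
  show ?thesis unfolding ny_def[abs_def] Let_def
    by (intro continuous_intros c) (use nz in auto)
qed

lemma open_nonsing:
  assumes "open \<Omega>" "C2_on \<Omega> w"
  shows "open (\<Omega> - Sing \<Omega> w)"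
proof -
  have c: "continuous_on \<Omega> (\<lambda>p. (Aw w p, Bw w p))"
    using Aw_cont[OF assms(2)] Bw_cont[OF assms(2)] by (intro continuous_intros)
  have "open (\<Omega> \<inter> (\<lambda>p. (Aw w p, Bw w p)) -` (- {(0,0)}))"
    by (rule continuous_open_preimage[OF c assms(1)]) auto
  moreover have "\<Omega> \<inter> (\<lambda>p. (Aw w p, Bw w p)) -` (- {(0,0)}) = \<Omega> - Sing \<Omega> w"
    by (auto simp: Sing_iff)
  ultimately show ?thesis by simp
qed

lemma N_bound: "\<bar>fst (Nfield w p)\<bar> \<le> 1" "\<bar>snd (Nfield w p)\<bar> \<le> 1"
proof -
  have "\<bar>a / sqrt (a^2 + b^2)\<bar> \<le> 1" for a b :: real
  proof (cases "a = 0")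
    case False
    have "sqrt (a^2) \<le> sqrt (a^2 + b^2)" by (rule real_sqrt_le_mono) simp
    then have le: "\<bar>a\<bar> \<le> sqrt (a^2 + b^2)" by simp
    have "0 < \<bar>a\<bar>" using False by simp
    then have sp: "sqrt (a^2 + b^2) > 0" using le by linarith
    have "\<bar>a / sqrt (a^2 + b^2)\<bar> = \<bar>a\<bar> / sqrt (a^2 + b^2)" using sp by (simp add: abs_div)
    also have "\<dots> \<le> 1" using le sp by simp
    finally show ?thesis .
  qed simp
  then show "\<bar>fst (Nfield w p)\<bar> \<le> 1" "\<bar>snd (Nfield w p)\<bar> \<le> 1"
    unfolding Nfield_fst Nfield_snd by auto
qed

lemma sign_identity:
  fixes a1 a2 b1 b2 :: real
  assumes "a1^2 + a2^2 > 0" "b1^2 + b2^2 > 0"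
  defines "ra \<equiv> sqrt (a1^2 + a2^2)" and "rb \<equiv> sqrt (b1^2 + b2^2)"
  shows "(a1 - b1) * (a1/ra - b1/rb) + (a2 - b2) * (a2/ra - b2/rb)
       = (ra + rb) / 2 * ((a1/ra - b1/rb)^2 + (a2/ra - b2/rb)^2)"
proof -
  have ra: "ra > 0" "ra^2 = a1^2 + a2^2" using assms by (auto simp: ra_def)
  have rb: "rb > 0" "rb^2 = b1^2 + b2^2" using assms by (auto simp: rb_def)
  define al1 where "al1 = a1/ra"
  define al2 where "al2 = a2/ra"
  define be1 where "be1 = b1/rb"
  define be2 where "be2 = b2/rb"
  have sub: "a1 = ra*al1" "a2 = ra*al2" "b1 = rb*be1" "b2 = rb*be2"
    using ra rb by (auto simp: al1_def al2_def be1_def be2_def)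
  have "al1^2 + al2^2 = (a1^2 + a2^2) / ra^2" by (simp add: al1_def al2_def power_divide add_divide_distrib)
  then have n1: "al1^2 + al2^2 = 1" using ra by (metis less_irrefl divide_self zero_less_power)
  have "be1^2 + be2^2 = (b1^2 + b2^2) / rb^2" by (simp add: be1_def be2_def power_divide add_divide_distrib)
  then have n2: "be1^2 + be2^2 = 1" using rb by (metis less_irrefl divide_self zero_less_power)
  have "(ra*al1 - rb*be1) * (al1 - be1) + (ra*al2 - rb*be2) * (al2 - be2)
      = (ra + rb) / 2 * ((al1 - be1)^2 + (al2 - be2)^2) + (ra - rb)/2 * ((al1^2 + al2^2) - (be1^2+be2^2))"
    by (simp add: field_simps power2_eq_square)
  then show ?thesis using n1 n2 unfolding al1_def[symmetric] al2_def[symmetric] be1_def[symmetric] be2_def[symmetric]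
    by (simp add: sub[symmetric])
qed



definition sqd :: "real \<times> real \<Rightarrow> real \<Rightarrow> real \<times> real \<Rightarrow> real" where
  "sqd c r p = ((fst p - fst c)^2 + (snd p - snd c)^2) / r^2"
definition beta :: "real \<times> real \<Rightarrow> real \<Rightarrow> real \<times> real \<Rightarrow> real" where
  "beta c r p = 1 - stp ((sqd c r p - 1) / 3)"
definition bxx :: "real \<times> real \<Rightarrow> real \<Rightarrow> real \<times> real \<Rightarrow> real" where
  "bxx c r p = - (dstp ((sqd c r p - 1) / 3) * (2 * (fst p - fst c) / r^2 / 3))"
definition byy :: "real \<times> real \<Rightarrow> real \<Rightarrow> real \<times> real \<Rightarrow> real" where
  "byy c r p = - (dstp ((sqd c r p - 1) / 3) * (2 * (snd p - snd c) / r^2 / 3))"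

lemma dist_sq: "dist p c = sqrt ((fst p - fst c)^2 + (snd p - snd c)^2)"
  by (cases p, cases c) (simp add: dist_Pair_Pair dist_real_def)

lemma sqd_dist: "r > 0 \<Longrightarrow> sqd c r p = (dist p c / r)^2"
  by (simp add: sqd_def dist_sq power_divide)

lemma beta_hpx: "r > 0 \<Longrightarrow> hpx (beta c r) (bxx c r p) p"
  unfolding hpx_def beta_def[abs_def] bxx_def sqd_def
  by (auto intro!: derivative_eq_intros simp: field_simps)

lemma beta_hpy: "r > 0 \<Longrightarrow> hpy (beta c r) (byy c r p) p"
  unfolding hpy_def beta_def[abs_def] byy_def sqd_def
  by (auto intro!: derivative_eq_intros simp: field_simps)

lemma beta_one: "r > 0 \<Longrightarrow> dist p c \<le> r \<Longrightarrow> beta c r p = 1"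
proof -
  assume r: "r > 0" "dist p c \<le> r"
  have "(dist p c / r)^2 \<le> 1" using r by (simp add: power_le_one)
  then show ?thesis unfolding beta_def sqd_dist[OF r(1)] by (simp add: stp_0)
qed

lemma far: "r > 0 \<Longrightarrow> dist p c \<ge> 2*r \<Longrightarrow> (sqd c r p - 1) / 3 \<ge> 1"
proof -
  assume r: "r > 0" "dist p c \<ge> 2*r"
  have "2 \<le> dist p c / r" using r by (simp add: field_simps)
  then have "2^2 \<le> (dist p c / r)^2" by (rule power_mono) simp
  then show ?thesis unfolding sqd_dist[OF r(1)] by simp
qed

lemma beta_zero: "r > 0 \<Longrightarrow> dist p c \<ge> 2*r \<Longrightarrow> beta c r p = 0"
  using far by (simp add: beta_def stp_1)
lemma bxx_zero: "r > 0 \<Longrightarrow> dist p c \<ge> 2*r \<Longrightarrow> bxx c r p = 0"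
  using far by (simp add: bxx_def dstp_zero)
lemma byy_zero: "r > 0 \<Longrightarrow> dist p c \<ge> 2*r \<Longrightarrow> byy c r p = 0"
  using far by (simp add: byy_def dstp_zero)
lemma beta_range: "0 \<le> beta c r p" "beta c r p \<le> 1"
  using stp_range by (auto simp: beta_def)

lemma cont_beta: "r > 0 \<Longrightarrow> continuous_on UNIV (beta c r)"
  unfolding beta_def[abs_def] sqd_def
  by (intro continuous_intros continuous_on_compose2[OF continuous_stp]) auto
lemma cont_bxx: "r > 0 \<Longrightarrow> continuous_on UNIV (bxx c r)"
  unfolding bxx_def[abs_def] sqd_def
  by (intro continuous_intros continuous_on_compose2[OF continuous_dstp]) auto
lemma cont_byy: "r > 0 \<Longrightarrow> continuous_on UNIV (byy c r)"
  unfolding byy_def[abs_def] sqd_def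
  by (intro continuous_intros continuous_on_compose2[OF continuous_dstp]) auto

lemma coord_le_dist: "\<bar>fst p - fst c\<bar> \<le> dist p c" "\<bar>snd p - snd c\<bar> \<le> dist p c"
  unfolding dist_sq by (auto intro: real_sqrt_sum_squares_ge1 real_sqrt_sum_squares_ge2 simp: real_le_rsqrt)

lemma abs_2x: "\<bar>2 * a - 2 * b\<bar> = 2 * \<bar>a - b\<bar>" for a b :: real by (simp add: abs_if)

lemma bxx_bound:
  assumes r: "r > 0" and C: "\<forall>s. \<bar>dstp s\<bar> \<le> C"
  shows "\<bar>bxx c r p\<bar> \<le> 2 * C / r"
proof (cases "dist p c \<ge> 2*r")
  case True
  have "C \<ge> 0" using C by (meson abs_ge_zero order_trans)
  then show ?thesis using bxx_zero[OF r True] r by simp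
next
  case False
  have a: "\<bar>fst p - fst c\<bar> \<le> 2*r" using coord_le_dist(1)[of p c] False by linarith
  have "\<bar>bxx c r p\<bar> = \<bar>dstp ((sqd c r p - 1) / 3)\<bar> * (2 * \<bar>fst p - fst c\<bar> / r^2 / 3)"
    using r by (simp add: bxx_def abs_mult abs_div abs_2x)
  also have "\<dots> \<le> C * (2 * (2*r) / r^2 / 3)"
    by (rule mult_mono) (use C a r in \<open>auto intro!: divide_right_mono\<close>)
  also have "\<dots> \<le> 2 * C / r" using r C
    by (simp add: power2_eq_square field_simps) (meson abs_ge_zero order_trans)
  finally show ?thesis .
qed

lemma byy_bound:
  assumes r: "r > 0" and C: "\<forall>s. \<bar>dstp s\<bar> \<le> C"
  shows "\<bar>byy c r p\<bar> \<le> 2 * C / r"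
proof (cases "dist p c \<ge> 2*r")
  case True
  have "C \<ge> 0" using C by (meson abs_ge_zero order_trans)
  then show ?thesis using byy_zero[OF r True] r by simp
next
  case False
  have a: "\<bar>snd p - snd c\<bar> \<le> 2*r" using coord_le_dist(2)[of p c] False by linarith
  have "\<bar>byy c r p\<bar> = \<bar>dstp ((sqd c r p - 1) / 3)\<bar> * (2 * \<bar>snd p - snd c\<bar> / r^2 / 3)"
    using r by (simp add: byy_def abs_mult abs_div abs_2x)
  also have "\<dots> \<le> C * (2 * (2*r) / r^2 / 3)"
    by (rule mult_mono) (use C a r in \<open>auto intro!: divide_right_mono\<close>)
  also have "\<dots> \<le> 2 * C / r" using r C
    by (simp add: power2_eq_square field_simps) (meson abs_ge_zero order_trans)
  finally show ?thesis .
qed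

definition sqbox :: "real \<times> real \<Rightarrow> real \<Rightarrow> (real \<times> real) set" where
  "sqbox c r = cbox (fst c - 2*r, snd c - 2*r) (fst c + 2*r, snd c + 2*r)"

lemma outside_sqbox: "p \<notin> sqbox c r \<Longrightarrow> dist p c \<ge> 2*r"
proof -
  assume "p \<notin> sqbox c r"
  then have "\<bar>fst p - fst c\<bar> > 2*r \<or> \<bar>snd p - snd c\<bar> > 2*r"
    by (cases p) (auto simp: sqbox_def cbox_Pair_iff)
  then show ?thesis using coord_le_dist[of p c] by linarith
qed

lemma content_sqbox: "r \<ge> 0 \<Longrightarrow> measure lborel (sqbox c r) = 16 * r^2"
  by (simp add: sqbox_def content_Pair power2_eq_square)

lemma int_abs_bound:
  fixes f :: "real \<times> real \<Rightarrow> real"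
  assumes c: "continuous_on UNIV f" and b: "\<forall>p. \<bar>f p\<bar> \<le> K" and z: "\<forall>p. p \<notin> Q \<longrightarrow> f p = 0"
    and Q: "Q = cbox a b" "Q \<subseteq> R" and R: "R = cbox a' b'"
  shows "integral R (\<lambda>p. \<bar>f p\<bar>) \<le> K * measure lborel Q"
proof -
  have cQ: "continuous_on Q (\<lambda>p. \<bar>f p\<bar>)" using c by (auto intro!: continuous_intros intro: continuous_on_subset)
  have iQ: "((\<lambda>p. \<bar>f p\<bar>) has_integral integral Q (\<lambda>p. \<bar>f p\<bar>)) Q"
    using integrable_continuous[OF cQ[unfolded Q(1)]] Q(1) by (simp add: integrable_integral)
  have "((\<lambda>p. \<bar>f p\<bar>) has_integral integral Q (\<lambda>p. \<bar>f p\<bar>)) R"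
    by (rule has_integral_on_superset[OF iQ _ Q(2)]) (use z in auto)
  then have "integral R (\<lambda>p. \<bar>f p\<bar>) = integral Q (\<lambda>p. \<bar>f p\<bar>)" by (rule integral_unique)
  also have "\<dots> \<le> integral Q (\<lambda>p. K)"
    by (rule integral_le) (use b integrable_continuous[OF cQ[unfolded Q(1)]] Q(1) in auto)
  also have "\<dots> = K * measure lborel Q" by (simp add: Q(1))
  finally show ?thesis .
qed

lemma int_bxx:
  assumes r: "r > 0" and C: "\<forall>s. \<bar>dstp s\<bar> \<le> C" and Q: "sqbox c r \<subseteq> cbox a' b'"
  shows "integral (cbox a' b') (\<lambda>p. \<bar>bxx c r p\<bar>) \<le> 32 * C * r"
proof -
  have "integral (cbox a' b') (\<lambda>p. \<bar>bxx c r p\<bar>) \<le> (2 * C / r) * measure lborel (sqbox c r)"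
    by (rule int_abs_bound[OF cont_bxx[OF r] _ _ sqbox_def Q refl])
      (use bxx_bound[OF r C] bxx_zero[OF r] outside_sqbox in auto)
  also have "\<dots> = 32 * C * r" using r by (simp add: content_sqbox power2_eq_square)
  finally show ?thesis .
qed

lemma int_byy:
  assumes r: "r > 0" and C: "\<forall>s. \<bar>dstp s\<bar> \<le> C" and Q: "sqbox c r \<subseteq> cbox a' b'"
  shows "integral (cbox a' b') (\<lambda>p. \<bar>byy c r p\<bar>) \<le> 32 * C * r"
proof -
  have "integral (cbox a' b') (\<lambda>p. \<bar>byy c r p\<bar>) \<le> (2 * C / r) * measure lborel (sqbox c r)"
    by (rule int_abs_bound[OF cont_byy[OF r] _ _ sqbox_def Q refl])
      (use byy_bound[OF r C] byy_zero[OF r] outside_sqbox in auto)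
  also have "\<dots> = 32 * C * r" using r by (simp add: content_sqbox power2_eq_square)
  finally show ?thesis .
qed



definition psi :: "nat set \<Rightarrow> (nat \<Rightarrow> real \<times> real) \<Rightarrow> (nat \<Rightarrow> real) \<Rightarrow> real \<times> real \<Rightarrow> real" where
  "psi F c r p = 1 - stp (\<Sum>i\<in>F. beta (c i) (r i) p)"
definition psix :: "nat set \<Rightarrow> (nat \<Rightarrow> real \<times> real) \<Rightarrow> (nat \<Rightarrow> real) \<Rightarrow> real \<times> real \<Rightarrow> real" where
  "psix F c r p = - (dstp (\<Sum>i\<in>F. beta (c i) (r i) p) * (\<Sum>i\<in>F. bxx (c i) (r i) p))"
definition psiy :: "nat set \<Rightarrow> (nat \<Rightarrow> real \<times> real) \<Rightarrow> (nat \<Rightarrow> real) \<Rightarrow> real \<times> real \<Rightarrow> real" where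
  "psiy F c r p = - (dstp (\<Sum>i\<in>F. beta (c i) (r i) p) * (\<Sum>i\<in>F. byy (c i) (r i) p))"

context
  fixes F :: "nat set" and c :: "nat \<Rightarrow> real \<times> real" and r :: "nat \<Rightarrow> real"
  assumes fin: "finite F" and rpos: "\<forall>i\<in>F. r i > 0"
begin

lemma psi_hpx: "hpx (psi F c r) (psix F c r p) p"
proof -
  have "((\<lambda>t. \<Sum>i\<in>F. beta (c i) (r i) (t, snd p)) has_real_derivative (\<Sum>i\<in>F. bxx (c i) (r i) p)) (at (fst p))"
    by (rule DERIV_sum) (use beta_hpx rpos in \<open>auto simp: hpx_def\<close>)
  from DERIV_diff[OF DERIV_const[of 1] DERIV_stp_chain[OF this]] show ?thesis
    unfolding hpx_def psi_def[abs_def] psix_def by simp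
qed

lemma psi_hpy: "hpy (psi F c r) (psiy F c r p) p"
proof -
  have "((\<lambda>t. \<Sum>i\<in>F. beta (c i) (r i) (fst p, t)) has_real_derivative (\<Sum>i\<in>F. byy (c i) (r i) p)) (at (snd p))"
    by (rule DERIV_sum) (use beta_hpy rpos in \<open>auto simp: hpy_def\<close>)
  from DERIV_diff[OF DERIV_const[of 1] DERIV_stp_chain[OF this]] show ?thesis
    unfolding hpy_def psi_def[abs_def] psiy_def by simp
qed

lemma cont_sum_beta: "continuous_on UNIV (\<lambda>p. \<Sum>i\<in>F. beta (c i) (r i) p)"
  by (intro continuous_on_sum) (use cont_beta rpos in auto)

lemma cont_psi: "continuous_on UNIV (psi F c r)"
  unfolding psi_def[abs_def]
  by (intro continuous_intros continuous_on_compose2[OF continuous_stp] cont_sum_beta) auto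

lemma cont_psix: "continuous_on UNIV (psix F c r)"
  unfolding psix_def[abs_def]
  by (intro continuous_intros continuous_on_compose2[OF continuous_dstp] cont_sum_beta continuous_on_sum)
     (use cont_bxx rpos in auto)

lemma cont_psiy: "continuous_on UNIV (psiy F c r)"
  unfolding psiy_def[abs_def]
  by (intro continuous_intros continuous_on_compose2[OF continuous_dstp] cont_sum_beta continuous_on_sum)
     (use cont_byy rpos in auto)

lemma sum_beta_ge1: "i \<in> F \<Longrightarrow> dist p (c i) < r i \<Longrightarrow> (\<Sum>j\<in>F. beta (c j) (r j) p) \<ge> 1"
proof -
  assume i: "i \<in> F" "dist p (c i) < r i"
  have "beta (c i) (r i) p = 1" using beta_one[of "r i" p "c i"] i rpos by auto
  moreover have "beta (c i) (r i) p \<le> (\<Sum>j\<in>F. beta (c j) (r j) p)"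
    by (rule member_le_sum) (use i fin beta_range in auto)
  ultimately show ?thesis by simp
qed

lemma psi_zero: "i \<in> F \<Longrightarrow> dist p (c i) < r i \<Longrightarrow> psi F c r p = 0 \<and> psix F c r p = 0 \<and> psiy F c r p = 0"
  using sum_beta_ge1[of i p] by (simp add: psi_def psix_def psiy_def stp_1 dstp_zero)

lemma psi_one: "\<forall>i\<in>F. dist p (c i) \<ge> 2 * r i \<Longrightarrow> psi F c r p = 1"
proof -
  assume a: "\<forall>i\<in>F. dist p (c i) \<ge> 2 * r i"
  have "(\<Sum>i\<in>F. beta (c i) (r i) p) = 0"
    by (rule sum.neutral) (use a rpos beta_zero in auto)
  then show ?thesis by (simp add: psi_def stp_0)
qed

lemma psi_range: "0 \<le> psi F c r p" "psi F c r p \<le> 1"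
  using stp_range by (auto simp: psi_def)

lemma psix_bound: "\<forall>s. \<bar>dstp s\<bar> \<le> C \<Longrightarrow> \<bar>psix F c r p\<bar> \<le> C * (\<Sum>i\<in>F. \<bar>bxx (c i) (r i) p\<bar>)"
proof -
  assume C: "\<forall>s. \<bar>dstp s\<bar> \<le> C"
  have "\<bar>psix F c r p\<bar> = \<bar>dstp (\<Sum>i\<in>F. beta (c i) (r i) p)\<bar> * \<bar>\<Sum>i\<in>F. bxx (c i) (r i) p\<bar>"
    by (simp add: psix_def abs_mult)
  also have "\<dots> \<le> C * (\<Sum>i\<in>F. \<bar>bxx (c i) (r i) p\<bar>)"
    by (rule mult_mono) (use C in \<open>auto intro: sum_abs order_trans[OF abs_ge_zero]\<close>)
  finally show ?thesis .
qed

lemma psiy_bound: "\<forall>s. \<bar>dstp s\<bar> \<le> C \<Longrightarrow> \<bar>psiy F c r p\<bar> \<le> C * (\<Sum>i\<in>F. \<bar>byy (c i) (r i) p\<bar>)"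
proof -
  assume C: "\<forall>s. \<bar>dstp s\<bar> \<le> C"
  have "\<bar>psiy F c r p\<bar> = \<bar>dstp (\<Sum>i\<in>F. beta (c i) (r i) p)\<bar> * \<bar>\<Sum>i\<in>F. byy (c i) (r i) p\<bar>"
    by (simp add: psiy_def abs_mult)
  also have "\<dots> \<le> C * (\<Sum>i\<in>F. \<bar>byy (c i) (r i) p\<bar>)"
    by (rule mult_mono) (use C in \<open>auto intro: sum_abs order_trans[OF abs_ge_zero]\<close>)
  finally show ?thesis .
qed

end



lemma hpx_open_if:
  assumes "open U" "p \<in> U" "hpx f d p"
  shows "hpx (\<lambda>q. if q \<in> U then f q else 0) d p"
proof -
  obtain e where e: "e > 0" "ball p e \<subseteq> U" using assms open_contains_ball by blast
  have "\<forall>\<^sub>F t in nhds (fst p). dist t (fst p) < e" using e(1) eventually_nhds_metric by blast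
  then have "\<forall>\<^sub>F t in nhds (fst p). (t, snd p) \<in> U"
    by eventually_elim (use e in \<open>cases p; auto simp: dist_Pair_Pair dist_commute subset_iff\<close>)
  then have ev: "\<forall>\<^sub>F t in nhds (fst p). (if (t, snd p) \<in> U then f (t, snd p) else 0) = f (t, snd p)"
    by eventually_elim auto
  show ?thesis using assms(3) unfolding hpx_def using DERIV_cong_ev[OF refl ev refl] by simp
qed

lemma hpy_open_if:
  assumes "open U" "p \<in> U" "hpy f d p"
  shows "hpy (\<lambda>q. if q \<in> U then f q else 0) d p"
proof -
  obtain e where e: "e > 0" "ball p e \<subseteq> U" using assms open_contains_ball by blast
  have "\<forall>\<^sub>F t in nhds (snd p). dist t (snd p) < e" using e(1) eventually_nhds_metric by blast
  then have "\<forall>\<^sub>F t in nhds (snd p). (fst p, t) \<in> U"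
    by eventually_elim (use e in \<open>cases p; auto simp: dist_Pair_Pair dist_commute subset_iff\<close>)
  then have ev: "\<forall>\<^sub>F t in nhds (snd p). (if (fst p, t) \<in> U then f (fst p, t) else 0) = f (fst p, t)"
    by eventually_elim auto
  show ?thesis using assms(3) unfolding hpy_def using DERIV_cong_ev[OF refl ev refl] by simp
qed

lemma K_props:
  fixes u v :: "real \<times> real \<Rightarrow> real"
  assumes "open \<Omega>" "bounded \<Omega>" "continuous_on (closure \<Omega>) u" "continuous_on (closure \<Omega>) v"
    "\<forall>p\<in>frontier \<Omega>. u p \<le> v p" "\<epsilon> > 0"
  shows "compact {p\<in>closure \<Omega>. u p - v p \<ge> \<epsilon>}" "{p\<in>closure \<Omega>. u p - v p \<ge> \<epsilon>} \<subseteq> \<Omega>"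
proof -
  have c: "continuous_on (closure \<Omega>) (\<lambda>p. u p - v p)" using assms by (intro continuous_intros)
  have "closed (closure \<Omega> \<inter> (\<lambda>p. u p - v p) -` {\<epsilon>..})"
    by (rule continuous_closed_preimage[OF c]) auto
  moreover have "closure \<Omega> \<inter> (\<lambda>p. u p - v p) -` {\<epsilon>..} = {p\<in>closure \<Omega>. u p - v p \<ge> \<epsilon>}" by auto
  ultimately have cl: "closed {p\<in>closure \<Omega>. u p - v p \<ge> \<epsilon>}" by simp
  have "bounded {p\<in>closure \<Omega>. u p - v p \<ge> \<epsilon>}"
    using bounded_closure[OF assms(2)] by (rule bounded_subset) auto
  then show "compact {p\<in>closure \<Omega>. u p - v p \<ge> \<epsilon>}" using cl compact_eq_bounded_closed by blast
  show "{p\<in>closure \<Omega>. u p - v p \<ge> \<epsilon>} \<subseteq> \<Omega>"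
  proof
    fix p assume p: "p \<in> {p\<in>closure \<Omega>. u p - v p \<ge> \<epsilon>}"
    show "p \<in> \<Omega>"
    proof (rule ccontr)
      assume "p \<notin> \<Omega>"
      moreover have "p \<in> closure \<Omega>" using p by blast
      ultimately have "p \<in> frontier \<Omega>" using assms(1) unfolding frontier_def interior_open[OF assms(1)] by blast
      then have "u p \<le> v p" using assms(5) by blast
      then show False using assms(6) p by simp
    qed
  qed
qed

lemma box_exists:
  assumes "bounded (\<Omega> :: (real \<times> real) set)"
  shows "\<exists>L\<ge>2. \<forall>p\<in>closure \<Omega>. \<bar>fst p\<bar> \<le> L - 2 \<and> \<bar>snd p\<bar> \<le> L - 2"
proof -
  obtain B where B: "\<forall>p\<in>closure \<Omega>. norm p \<le> B" using bounded_closure[OF assms] bounded_iff by blast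
  have n: "\<bar>fst p\<bar> \<le> norm p" "\<bar>snd p\<bar> \<le> norm p" for p :: "real \<times> real"
    using norm_fst_le[of "fst p" "snd p"] norm_snd_le[of "snd p" "fst p"] by (metis prod.collapse real_norm_def)+
  show ?thesis
  proof (intro exI[of _ "max B 0 + 2"] conjI ballI)
    fix p assume "p \<in> closure \<Omega>"
    then have "norm p \<le> max B 0" using B by (meson order_trans max.cobounded1)
    then show "\<bar>fst p\<bar> \<le> max B 0 + 2 - 2" "\<bar>snd p\<bar> \<le> max B 0 + 2 - 2" using n[of p] by linarith+
  qed simp
qed

lemma part2:
  fixes u v :: "real \<times> real \<Rightarrow> real"
  assumes op: "open \<Omega>" and bd: "bounded \<Omega>" and Cu: "C2_on \<Omega> u" and Cv: "C2_on \<Omega> v"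
    and cu: "continuous_on (closure \<Omega>) u" and cv: "continuous_on (closure \<Omega>) v"
    and bnd: "\<forall>p\<in>frontier \<Omega>. u p \<le> v p" and eps: "\<epsilon> > 0"
    and pm: "pm \<in> \<Omega>" "u pm - v pm > \<epsilon>"
    and cross: "\<forall>p\<in>\<Omega>. u p - v p > \<epsilon> \<longrightarrow> Aw u p * Bw v p - Aw v p * Bw u p = 0"
  shows False
proof -
  define K where "K = {p\<in>closure \<Omega>. u p - v p \<ge> \<epsilon>}"
  have K: "compact K" "K \<subseteq> \<Omega>" using K_props[OF op bd cu cv bnd eps] by (auto simp: K_def)
  obtain L where L: "L \<ge> 2" "\<forall>p\<in>closure \<Omega>. \<bar>fst p\<bar> \<le> L - 2 \<and> \<bar>snd p\<bar> \<le> L - 2"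
    using box_exists[OF bd] by blast
  have notin: "p \<notin> \<Omega>" if "\<bar>fst p\<bar> = L \<or> \<bar>snd p\<bar> = L" for p
    using L that closure_subset by fastforce
  have C1u: "C1_on \<Omega> u" "C1_on \<Omega> (px u)" "C1_on \<Omega> (py u)" using Cu by (auto simp: C2_on_def)
  have C1v: "C1_on \<Omega> v" using Cv by (auto simp: C2_on_def)
  define \<phi> where "\<phi> p = mq (u p - v p - \<epsilon>)" for p
  define H1 where "H1 p = (if p \<in> \<Omega> then \<phi> p * Bw u p else 0)" for p
  define H2 where "H2 p = (if p \<in> \<Omega> then - (\<phi> p * Aw u p) else 0)" for p
  define H1x where "H1x p = 2 * max (u p - v p - \<epsilon>) 0 * (px u p - px v p) * Bw u p + \<phi> p * (px (py u) p + 1)" for p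
  define H2y where "H2y p = - (2 * max (u p - v p - \<epsilon>) 0 * (py u p - py v p) * Aw u p + \<phi> p * (py (px u) p - 1))" for p
  have V: "open (- K)" using K compact_imp_closed by blast
  have UV: "\<Omega> \<union> - K = UNIV" using K by auto
  have Kz: "\<phi> p = 0" if "p \<in> \<Omega>" "p \<notin> K" for p
    using that closure_subset by (auto simp: \<phi>_def K_def mq_zero)
  have Kz': "max (u p - v p - \<epsilon>) 0 = 0" if "p \<in> \<Omega>" "p \<notin> K" for p
    using that closure_subset by (auto simp: K_def)
  have H1z: "\<forall>p\<in>-K. H1 p = 0" using Kz by (auto simp: H1_def)
  have H2z: "\<forall>p\<in>-K. H2 p = 0" using Kz by (auto simp: H2_def)
  have dH1: "\<forall>p\<in>\<Omega>. hpx H1 (H1x p) p"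
  proof
    fix p assume p: "p \<in> \<Omega>"
    obtain x y where xy: "p = (x,y)" by (cases p)
    have "hpx (\<lambda>q. \<phi> q * Bw u q) (H1x p) p"
      unfolding hpx_def \<phi>_def Bw_def H1x_def xy using p xy
      by (auto intro!: derivative_eq_intros C1_hpx'[OF C1u(1)] C1_hpx'[OF C1v] C1_hpx'[OF C1u(3)]
          simp: Bw_def algebra_simps)
    then show "hpx H1 (H1x p) p" unfolding H1_def using hpx_open_if[OF op p] by blast
  qed
  have dH2: "\<forall>p\<in>\<Omega>. hpy H2 (H2y p) p"
  proof
    fix p assume p: "p \<in> \<Omega>"
    obtain x y where xy: "p = (x,y)" by (cases p)
    have "hpy (\<lambda>q. - (\<phi> q * Aw u q)) (H2y p) p"
      unfolding hpy_def \<phi>_def Aw_def H2y_def xy using p xy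
      by (auto intro!: derivative_eq_intros C1_hpy'[OF C1u(1)] C1_hpy'[OF C1v] C1_hpy'[OF C1u(2)]
          simp: Aw_def algebra_simps)
    then show "hpy H2 (H2y p) p" unfolding H2_def using hpy_open_if[OF op p] by blast
  qed
  have cont\<Omega>: "continuous_on \<Omega> u" "continuous_on \<Omega> v" "continuous_on \<Omega> (px u)" "continuous_on \<Omega> (py u)"
    "continuous_on \<Omega> (px v)" "continuous_on \<Omega> (py v)" "continuous_on \<Omega> (px (py u))" "continuous_on \<Omega> (py (px u))"
    using Cu Cv unfolding C2_on_def C1_on_def by auto
  have cH1x: "continuous_on \<Omega> H1x" unfolding H1x_def[abs_def] \<phi>_def Bw_def
    by (intro continuous_intros cont\<Omega>)
  have cH2y: "continuous_on \<Omega> H2y" unfolding H2y_def[abs_def] \<phi>_def Aw_def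
    by (intro continuous_intros cont\<Omega>)
  note g1 = glue_hpx[OF op V UV H1z dH1 cH1x]
  note g2 = glue_hpy[OF op V UV H2z dH2 cH2y]
  define D where "D p = (if p \<in> \<Omega> then H1x p else 0) + (if p \<in> \<Omega> then H2y p else 0)" for p
  have I1: "integral (cbox (-L,-L) (L,L)) (\<lambda>p. if p \<in> \<Omega> then H1x p else 0) = 0"
    by (rule int_px_zero[OF g1]) (use notin L in \<open>auto simp: H1_def\<close>)
  have I2: "integral (cbox (-L,-L) (L,L)) (\<lambda>p. if p \<in> \<Omega> then H2y p else 0) = 0"
    by (rule int_py_zero[OF g2]) (use notin L in \<open>auto simp: H2_def\<close>)
  have cD: "continuous_on UNIV D" unfolding D_def[abs_def] using g1(2) g2(2) by (intro continuous_intros)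
  have ID: "integral (cbox (-L,-L) (L,L)) D = 0"
    unfolding D_def using I1 I2 integral_add[OF integrable_continuous[OF continuous_on_subset[OF g1(2)]]
        integrable_continuous[OF continuous_on_subset[OF g2(2)]]] by auto
  have Deq: "D p = (if p \<in> \<Omega> then 2 * \<phi> p else 0)" for p
  proof (cases "p \<in> \<Omega>")
    case True
    have sw: "px (py u) p = py (px u) p" by (rule schwarz[OF op Cu True])
    have cr: "max (u p - v p - \<epsilon>) 0 * ((px u p - px v p) * Bw u p - (py u p - py v p) * Aw u p) = 0"
    proof (cases "u p - v p > \<epsilon>")
      case True
      then have "Aw u p * Bw v p - Aw v p * Bw u p = 0" using cross \<open>p \<in> \<Omega>\<close> by auto
      then show ?thesis by (simp add: Aw_def Bw_def algebra_simps)
    qed simp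
    show ?thesis using True sw cr by (simp add: D_def H1x_def H2y_def algebra_simps)
  qed (simp add: D_def)
  have "D pm = 0"
  proof (rule has_integral_0_cbox_imp_0[where a="(-L,-L)" and b="(L,L)" and f=D])
    show "continuous_on (cbox (- L, - L) (L, L)) D" using cD continuous_on_subset by blast
    show "\<And>x. x \<in> box (- L, - L) (L, L) \<Longrightarrow> 0 \<le> D x" by (simp add: Deq \<phi>_def mq_nonneg)
    show "(D has_integral 0) (cbox (- L, - L) (L, L))"
      using ID integrable_continuous[OF continuous_on_subset[OF cD]] by (metis has_integral_integral subset_UNIV)
    have "(0,0) \<in> box (- L, - L) (L, L)" using L by (auto simp: mem_box Basis_prod_def)
    then show "box (- L, - L) (L, L) \<noteq> {}" by blast
    show "pm \<in> cbox (- L, - L) (L, L)" using L pm closure_subset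
      by (cases pm) (force simp: cbox_Pair_iff abs_le_iff)
  qed
  moreover have "D pm > 0" using pm by (simp add: Deq \<phi>_def mq_pos)
  ultimately show False by simp
qed



lemma hpx_mult3:
  "hpx f f' p \<Longrightarrow> hpx g g' p \<Longrightarrow> hpx h h' p \<Longrightarrow>
   hpx (\<lambda>q. f q * g q * h q) (f' * g p * h p + f p * g' * h p + f p * g p * h') p"
  unfolding hpx_def by (auto intro!: derivative_eq_intros simp: algebra_simps)
lemma hpy_mult3:
  "hpy f f' p \<Longrightarrow> hpy g g' p \<Longrightarrow> hpy h h' p \<Longrightarrow>
   hpy (\<lambda>q. f q * g q * h q) (f' * g p * h p + f p * g' * h p + f p * g p * h') p"
  unfolding hpy_def by (auto intro!: derivative_eq_intros simp: algebra_simps)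
lemma hpx_diff: "hpx f f' p \<Longrightarrow> hpx g g' p \<Longrightarrow> hpx (\<lambda>q. f q - g q) (f' - g') p"
  unfolding hpx_def by (auto intro!: derivative_eq_intros)
lemma hpy_diff: "hpy f f' p \<Longrightarrow> hpy g g' p \<Longrightarrow> hpy (\<lambda>q. f q - g q) (f' - g') p"
  unfolding hpy_def by (auto intro!: derivative_eq_intros)

lemma cover:
  fixes A SK :: "(real \<times> real) set"
  assumes H: "hausdorff1 A = 0" and SK: "compact SK" "SK \<subseteq> A" and eta: "\<eta> > 0"
  shows "\<exists>(F::nat set) c r. finite F \<and> (\<forall>i\<in>F. r i > 0 \<and> r i \<le> 2*\<eta> \<and> c i \<in> SK)
     \<and> SK \<subseteq> (\<Union>i\<in>F. ball (c i) (r i)) \<and> (\<Sum>i\<in>F. r i) \<le> 2*\<eta>"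
proof -
  have "hausdorff_pre1 \<eta> A \<le> hausdorff1 A" unfolding hausdorff1_def
    by (rule SUP_upper) (use eta in auto)
  then have "hausdorff_pre1 \<eta> A < ennreal \<eta>" using H eta by simp
  then obtain C where C: "A \<subseteq> (\<Union>i. C i)" "\<forall>i. bounded (C i) \<and> diameter (C i) \<le> \<eta>"
      and sC: "(\<Sum>i. ennreal (diameter (C i))) < ennreal \<eta>"
    unfolding hausdorff_pre1_def INF_less_iff by blast
  have d0: "0 \<le> diameter (C i)" for i
  proof -
    have "bounded (C i)" using C(2) by blast
    then show ?thesis by (rule diameter_ge_0)
  qed
  have "(\<Sum>i. ennreal (diameter (C i))) \<noteq> top"
    using order.strict_trans[OF sC ennreal_less_top] by (simp add: less_top)
  then have sm: "summable (\<lambda>i. diameter (C i))" by (rule summable_suminf_not_top[OF d0])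
  have "ennreal (\<Sum>i. diameter (C i)) < ennreal \<eta>" using sC suminf_ennreal2[OF d0 sm] by simp
  then have sl: "(\<Sum>i. diameter (C i)) < \<eta>" using ennreal_less_iff[OF suminf_nonneg[OF sm d0]] by blast
  define I where "I = {i. C i \<inter> SK \<noteq> {}}"
  define c where "c i = (SOME x. x \<in> C i \<inter> SK)" for i
  define r where "r i = diameter (C i) + \<eta> * (1/2)^(Suc i)" for i
  have cI: "c i \<in> C i \<inter> SK" if "i \<in> I" for i
  proof -
    have "C i \<inter> SK \<noteq> {}" using that by (simp add: I_def)
    then show ?thesis unfolding c_def by (rule someI_ex[OF ex_in_conv[THEN iffD2]])
  qed
  have rpos: "r i > 0" for i
  proof -
    have "\<eta> * (1/2)^(Suc i) > 0" using eta by simp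
    then show ?thesis using d0[of i] unfolding r_def by linarith
  qed
  have rle: "r i \<le> 2*\<eta>" for i
  proof -
    have "(1/2::real)^(Suc i) \<le> 1" by (rule power_le_one) auto
    then have "\<eta> * (1/2)^(Suc i) \<le> \<eta>" using eta by (intro mult_left_le) auto
    moreover have "diameter (C i) \<le> \<eta>" using C(2) by blast
    ultimately show ?thesis unfolding r_def by linarith
  qed
  have cov: "SK \<subseteq> (\<Union>i\<in>I. ball (c i) (r i))"
  proof
    fix x assume x: "x \<in> SK"
    then have "x \<in> A" using SK(2) by blast
    then have "x \<in> (\<Union>i. C i)" using C(1) by blast
    then obtain i where i: "x \<in> C i" by blast
    then have iI: "i \<in> I" using x by (auto simp: I_def)
    have "bounded (C i)" using C(2) by blast
    then have "dist (c i) x \<le> diameter (C i)" using diameter_bounded_bound[of "C i" "c i" x] cI[OF iI] i by blast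
    moreover have "\<eta> * (1/2)^(Suc i) > 0" using eta by simp
    ultimately have "dist (c i) x < r i" unfolding r_def by linarith
    then have "x \<in> ball (c i) (r i)" by simp
    then show "x \<in> (\<Union>i\<in>I. ball (c i) (r i))" using iI by blast
  qed
  obtain F where F: "F \<subseteq> I" "finite F" "SK \<subseteq> (\<Union>i\<in>F. ball (c i) (r i))"
    by (rule compactE_image[OF SK(1) _ cov]) auto
  have geo: "summable (\<lambda>i. (1/2::real)^(Suc i))" "(\<Sum>i. (1/2::real)^(Suc i)) = 1"
  proof -
    have s: "(\<lambda>i. (1/2::real)^i) sums 2" using geometric_sums[of "1/2::real"] by simp
    then have "(\<lambda>i. (1/2) * (1/2::real)^i) sums ((1/2) * 2)" by (rule sums_mult)
    then have "(\<lambda>i. (1/2::real)^(Suc i)) sums 1" by simp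
    then show "summable (\<lambda>i. (1/2::real)^(Suc i))" "(\<Sum>i. (1/2::real)^(Suc i)) = 1"
      by (auto simp: sums_iff)
  qed
  have "(\<Sum>i\<in>F. r i) = (\<Sum>i\<in>F. diameter (C i)) + \<eta> * (\<Sum>i\<in>F. (1/2)^(Suc i))"
    by (simp add: r_def sum.distrib sum_distrib_left)
  also have "\<dots> \<le> (\<Sum>i. diameter (C i)) + \<eta> * 1"
  proof (rule add_mono)
    show "(\<Sum>i\<in>F. diameter (C i)) \<le> (\<Sum>i. diameter (C i))"
      by (rule sum_le_suminf[OF sm F(2)]) (use d0 in auto)
    have "(\<Sum>i\<in>F. (1/2::real)^(Suc i)) \<le> (\<Sum>i. (1/2)^(Suc i))"
      by (rule sum_le_suminf[OF geo(1) F(2)]) auto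
    then show "\<eta> * (\<Sum>i\<in>F. (1/2)^(Suc i)) \<le> \<eta> * 1" using geo(2) eta by simp
  qed
  also have "\<dots> \<le> 2 * \<eta>" using sl by simp
  finally have "(\<Sum>i\<in>F. r i) \<le> 2*\<eta>" .
  moreover have "\<forall>i\<in>F. r i > 0 \<and> r i \<le> 2*\<eta> \<and> c i \<in> SK" using F(1) rpos rle cI by blast
  ultimately have "finite F \<and> (\<forall>i\<in>F. r i > 0 \<and> r i \<le> 2*\<eta> \<and> c i \<in> SK)
     \<and> SK \<subseteq> (\<Union>i\<in>F. ball (c i) (r i)) \<and> (\<Sum>i\<in>F. r i) \<le> 2*\<eta>" using F(2,3) by simp
  then show ?thesis by blast
qed



lemma box_around:
  fixes f :: "real \<times> real \<Rightarrow> real"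
  assumes "open U" "q \<in> U" "continuous_on U f" "f q > 0"
  shows "\<exists>h>0. cbox (fst q - h, snd q - h) (fst q + h, snd q + h) \<subseteq> U \<and>
     (\<forall>p\<in>cbox (fst q - h, snd q - h) (fst q + h, snd q + h). f p \<ge> f q / 2)"
proof -
  have "continuous (at q) f" using assms(1,2,3) continuous_on_eq_continuous_at by blast
  then have "(f \<longlongrightarrow> f q) (at q)" by (simp add: continuous_at)
  moreover have "f q / 2 < f q" using assms(4) by simp
  ultimately have "\<forall>\<^sub>F p in at q. f p > f q / 2" by (rule order_tendstoD(1))
  then obtain e where e0: "e > 0" "\<forall>p. p \<noteq> q \<and> dist p q < e \<longrightarrow> f p > f q / 2"
    unfolding eventually_at by (auto simp: dist_commute)
  have e: "\<forall>p. dist p q < e \<longrightarrow> f p \<ge> f q / 2"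
  proof (intro allI impI)
    fix p assume "dist p q < e"
    show "f p \<ge> f q / 2"
    proof (cases "p = q")
      case False
      then have "f p > f q / 2" using e0(2) \<open>dist p q < e\<close> by blast
      then show ?thesis by simp
    qed (use assms(4) in simp)
  qed
  obtain e2 where e2: "e2 > 0" "ball q e2 \<subseteq> U" using assms(1,2) open_contains_ball by blast
  define h where "h = min e e2 / 4"
  have h: "h > 0" "2*h < e" "2*h < e2" using e0 e2 by (auto simp: h_def)
  have inB: "dist p q < min e e2" if "p \<in> cbox (fst q - h, snd q - h) (fst q + h, snd q + h)" for p
  proof -
    have "\<bar>fst p - fst q\<bar> \<le> h" "\<bar>snd p - snd q\<bar> \<le> h"
      unfolding abs_le_iff using that by (cases p; auto simp: cbox_Pair_iff)+
    moreover have "sqrt ((fst p - fst q)^2 + (snd p - snd q)^2) \<le> \<bar>fst p - fst q\<bar> + \<bar>snd p - snd q\<bar>"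
      by (rule sqrt_sum_squares_le_sum_abs)
    ultimately have "dist p q \<le> 2*h" unfolding dist_sq by linarith
    then show ?thesis using h by linarith
  qed
  show ?thesis
  proof (intro exI[of _ h] conjI ballI subsetI)
    fix p assume p: "p \<in> cbox (fst q - h, snd q - h) (fst q + h, snd q + h)"
    have "dist q p < e2" using inB[OF p] by (simp add: dist_commute)
    then have "p \<in> ball q e2" by simp
    then show "p \<in> U" using e2(2) by blast
  next
    fix p assume p: "p \<in> cbox (fst q - h, snd q - h) (fst q + h, snd q + h)"
    have "dist p q < e" using inB[OF p] by simp
    then show "f p \<ge> f q / 2" using e by blast
  qed (use h in auto)
qed

lemma N_cont:
  assumes "C2_on \<Omega> w"
  shows "continuous_on (\<Omega> - Sing \<Omega> w) (\<lambda>p. fst (Nfield w p))"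
        "continuous_on (\<Omega> - Sing \<Omega> w) (\<lambda>p. snd (Nfield w p))"
proof -
  have c: "continuous_on (\<Omega> - Sing \<Omega> w) (Aw w)" "continuous_on (\<Omega> - Sing \<Omega> w) (Bw w)"
    using Aw_cont[OF assms] Bw_cont[OF assms] by (auto intro: continuous_on_subset)
  have nz: "\<forall>p\<in>\<Omega> - Sing \<Omega> w. sqrt (Aw w p ^2 + Bw w p ^2) \<noteq> 0"
    using nonsing_pos by fastforce
  have nz2: "\<forall>p\<in>\<Omega> - Sing \<Omega> w. sqrt (Bw w p ^2 + Aw w p ^2) \<noteq> 0"
    using nz by (simp add: add.commute)
  show "continuous_on (\<Omega> - Sing \<Omega> w) (\<lambda>p. fst (Nfield w p))" unfolding Nfield_fst
    by (intro continuous_intros c) (use nz in auto)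
  show "continuous_on (\<Omega> - Sing \<Omega> w) (\<lambda>p. snd (Nfield w p))" unfolding Nfield_snd
    by (intro continuous_intros c) (use nz2 in auto)
qed

lemma mq_le: "\<bar>t\<bar> \<le> M \<Longrightarrow> mq t \<le> M^2"
proof -
  assume a: "\<bar>t\<bar> \<le> M"
  have "\<bar>max t 0\<bar> \<le> M" using a by linarith
  then have "\<bar>max t 0\<bar>^2 \<le> M^2" by (rule power_mono) simp
  then show ?thesis by (simp add: mq_def)
qed

lemma Q_sign:
  assumes "C2_on \<Omega> u" "C2_on \<Omega> v" "p \<in> \<Omega>" "p \<notin> Sing \<Omega> u" "p \<notin> Sing \<Omega> v"
  shows "(px u p - px v p) * (fst (Nfield u p) - fst (Nfield v p)) + (py u p - py v p) * (snd (Nfield u p) - snd (Nfield v p)) \<ge> 0"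
    "Nfield u p \<noteq> Nfield v p \<Longrightarrow> (px u p - px v p) * (fst (Nfield u p) - fst (Nfield v p)) + (py u p - py v p) * (snd (Nfield u p) - snd (Nfield v p)) > 0"
proof -
  have pa: "Aw u p ^2 + Bw u p ^2 > 0" using nonsing_pos assms by blast
  have pb: "Aw v p ^2 + Bw v p ^2 > 0" using nonsing_pos assms by blast
  define ra where "ra = sqrt (Aw u p ^2 + Bw u p ^2)"
  define rb where "rb = sqrt (Aw v p ^2 + Bw v p ^2)"
  have e1: "px u p - px v p = Aw u p - Aw v p" "py u p - py v p = Bw u p - Bw v p"
    by (simp_all add: Aw_def Bw_def)
  have N: "fst (Nfield u p) = Aw u p / ra" "snd (Nfield u p) = Bw u p / ra"
     "fst (Nfield v p) = Aw v p / rb" "snd (Nfield v p) = Bw v p / rb"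
    by (simp_all add: Nfield_fst Nfield_snd ra_def rb_def add.commute)
  have id: "(px u p - px v p) * (fst (Nfield u p) - fst (Nfield v p)) + (py u p - py v p) * (snd (Nfield u p) - snd (Nfield v p))
     = (ra + rb) / 2 * ((Aw u p/ra - Aw v p/rb)^2 + (Bw u p/ra - Bw v p/rb)^2)"
    unfolding e1 N ra_def rb_def by (rule sign_identity[OF pa pb])
  have rpos: "ra > 0" "rb > 0" using pa pb by (auto simp: ra_def rb_def)
  show "(px u p - px v p) * (fst (Nfield u p) - fst (Nfield v p)) + (py u p - py v p) * (snd (Nfield u p) - snd (Nfield v p)) \<ge> 0"
    unfolding id using rpos by (intro mult_nonneg_nonneg) auto
  assume ne: "Nfield u p \<noteq> Nfield v p"
  then have "Aw u p/ra - Aw v p/rb \<noteq> 0 \<or> Bw u p/ra - Bw v p/rb \<noteq> 0"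
    using N by (metis prod.expand eq_iff_diff_eq_0)
  then have "(Aw u p/ra - Aw v p/rb)^2 + (Bw u p/ra - Bw v p/rb)^2 > 0"
    by (simp add: sum_power2_gt_zero_iff)
  then show "(px u p - px v p) * (fst (Nfield u p) - fst (Nfield v p)) + (py u p - py v p) * (snd (Nfield u p) - snd (Nfield v p)) > 0"
    unfolding id using rpos by (intro mult_pos_pos) auto
qed



lemma part1:
  fixes u v :: "real \<times> real \<Rightarrow> real"
  assumes op: "open \<Omega>" and bd: "bounded \<Omega>" and Cu: "C2_on \<Omega> u" and Cv: "C2_on \<Omega> v"
    and cu: "continuous_on (closure \<Omega>) u" and cv: "continuous_on (closure \<Omega>) v"
    and divh: "\<forall>p \<in> \<Omega> - (Sing \<Omega> u \<union> Sing \<Omega> v). div2 (Nfield u) p \<ge> div2 (Nfield v) p"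
    and bnd: "\<forall>p\<in>frontier \<Omega>. u p \<le> v p"
    and H: "hausdorff1 (closure (Sing \<Omega> u \<union> Sing \<Omega> v)) = 0" and eps: "\<epsilon> > 0"
    and q1: "q1 \<in> \<Omega>" "q1 \<notin> Sing \<Omega> u \<union> Sing \<Omega> v" "u q1 - v q1 > \<epsilon>" "Nfield u q1 \<noteq> Nfield v q1"
  shows False
proof -
  define S where "S = Sing \<Omega> u \<union> Sing \<Omega> v"
  define U where "U = \<Omega> - S"
  have U_eq: "U = (\<Omega> - Sing \<Omega> u) \<inter> (\<Omega> - Sing \<Omega> v)" by (auto simp: U_def S_def)
  have opU: "open U" unfolding U_eq using open_nonsing[OF op Cu] open_nonsing[OF op Cv] by blast
  have UsubO: "U \<subseteq> \<Omega>" by (auto simp: U_def)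
  define K where "K = {p\<in>closure \<Omega>. u p - v p \<ge> \<epsilon>}"
  have K: "compact K" "K \<subseteq> \<Omega>" using K_props[OF op bd cu cv bnd eps] by (auto simp: K_def)
  have Kc: "closed K" using K(1) compact_imp_closed by blast
  define SK where "SK = S \<inter> K"
  have SK_eq: "SK = {p\<in>K. (Aw u p, Bw u p) = (0,0)} \<union> {p\<in>K. (Aw v p, Bw v p) = (0,0)}"
    using K(2) by (auto simp: SK_def S_def Sing_iff)
  have cAB: "continuous_on K (\<lambda>p. (Aw u p, Bw u p))" "continuous_on K (\<lambda>p. (Aw v p, Bw v p))"
    using Aw_cont[OF Cu] Bw_cont[OF Cu] Aw_cont[OF Cv] Bw_cont[OF Cv] K(2)
    by (auto intro!: continuous_intros intro: continuous_on_subset)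
  have SKc: "closed SK" unfolding SK_eq
    by (intro closed_Un continuous_closed_preimage_constant cAB Kc)
  have SKk: "compact SK"
  proof -
    have "compact (K \<inter> SK)" by (rule compact_Int_closed[OF K(1) SKc])
    moreover have "K \<inter> SK = SK" by (auto simp: SK_def)
    ultimately show ?thesis by simp
  qed
  have SKcl: "SK \<subseteq> closure (Sing \<Omega> u \<union> Sing \<Omega> v)" using closure_subset by (auto simp: SK_def S_def)
  define w where "w p = u p - v p" for p
  define G1 where "G1 p = fst (Nfield u p) - fst (Nfield v p)" for p
  define G2 where "G2 p = snd (Nfield u p) - snd (Nfield v p)" for p
  define \<phi> where "\<phi> p = mq (w p - \<epsilon>)" for p
  define mx where "mx p = 2 * max (w p - \<epsilon>) 0" for p
  define Qf where "Qf p = mx p * ((px u p - px v p) * G1 p + (py u p - py v p) * G2 p)" for p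
  have Qnn: "Qf p \<ge> 0" if "p \<in> U" for p
  proof -
    have "p \<in> \<Omega>" "p \<notin> Sing \<Omega> u" "p \<notin> Sing \<Omega> v" using that by (auto simp: U_def S_def)
    from Q_sign(1)[OF Cu Cv this] show ?thesis unfolding Qf_def G1_def G2_def mx_def
      by (intro mult_nonneg_nonneg) auto
  qed
  have Qq1: "Qf q1 > 0"
  proof -
    have a: "q1 \<in> \<Omega>" "q1 \<notin> Sing \<Omega> u" "q1 \<notin> Sing \<Omega> v" using q1 by auto
    have "mx q1 > 0" using q1(3) by (simp add: mx_def w_def)
    with Q_sign(2)[OF Cu Cv a q1(4)] show ?thesis unfolding Qf_def G1_def G2_def by simp
  qed
  have cont\<Omega>: "continuous_on \<Omega> u" "continuous_on \<Omega> v" "continuous_on \<Omega> (px u)" "continuous_on \<Omega> (py u)"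
    "continuous_on \<Omega> (px v)" "continuous_on \<Omega> (py v)"
    using Cu Cv unfolding C2_on_def C1_on_def by auto
  have contU: "continuous_on U u" "continuous_on U v" "continuous_on U (px u)" "continuous_on U (py u)"
    "continuous_on U (px v)" "continuous_on U (py v)"
    using cont\<Omega> UsubO by (auto intro: continuous_on_subset)
  have contN: "continuous_on U (\<lambda>p. fst (Nfield u p))" "continuous_on U (\<lambda>p. snd (Nfield u p))"
    "continuous_on U (\<lambda>p. fst (Nfield v p))" "continuous_on U (\<lambda>p. snd (Nfield v p))"
    using N_cont[OF Cu] N_cont[OF Cv] unfolding U_eq by (auto intro: continuous_on_subset)
  have contG: "continuous_on U G1" "continuous_on U G2"
    unfolding G1_def[abs_def] G2_def[abs_def] using contN by (auto intro!: continuous_intros)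
  have contQ: "continuous_on U Qf"
    unfolding Qf_def[abs_def] mx_def w_def by (intro continuous_intros contU contG)
  obtain h where h: "h > 0" "cbox (fst q1 - h, snd q1 - h) (fst q1 + h, snd q1 + h) \<subseteq> U"
    "\<forall>p\<in>cbox (fst q1 - h, snd q1 - h) (fst q1 + h, snd q1 + h). Qf p \<ge> Qf q1 / 2"
    using box_around[OF opU _ contQ Qq1] q1 by (auto simp: U_def S_def)
  define B0 where "B0 = cbox (fst q1 - h, snd q1 - h) (fst q1 + h, snd q1 + h)"
  have B0: "compact B0" "B0 \<subseteq> U" "\<forall>p\<in>B0. Qf p \<ge> Qf q1 / 2" using h by (auto simp: B0_def)
  have B0SK: "B0 \<inter> SK = {}" using B0(2) by (auto simp: U_def SK_def)
  obtain d where d: "d > 0" "\<forall>x\<in>B0. \<forall>y\<in>SK. d \<le> dist x y"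
    using separate_compact_closed[OF B0(1) SKc B0SK] by blast
  have cB0: "measure lborel B0 = (2*h)^2" using h(1) by (simp add: B0_def content_Pair power2_eq_square)
  obtain Mw where Mw: "\<forall>p\<in>closure \<Omega>. \<bar>w p\<bar> \<le> Mw"
  proof -
    have "compact (closure \<Omega>)" using bd by (simp add: compact_eq_bounded_closed bounded_closure)
    moreover have "continuous_on (closure \<Omega>) w" unfolding w_def[abs_def] using cu cv by (intro continuous_intros)
    ultimately have "compact (w ` closure \<Omega>)" by (simp add: compact_continuous_image)
    from compact_imp_bounded[OF this] obtain B where B: "\<forall>x\<in>w ` closure \<Omega>. norm x \<le> B"
      unfolding bounded_iff by blast
    show ?thesis by (rule that[of B]) (use B in simp)
  qed
  define \<Phi> where "\<Phi> = (\<bar>Mw\<bar> + \<epsilon>)^2 + 1"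
  have \<Phi>: "\<Phi> > 0" "\<forall>p\<in>\<Omega>. \<phi> p \<le> \<Phi>" "\<forall>p. \<phi> p \<ge> 0"
  proof -
    show "\<Phi> > 0" by (simp add: \<Phi>_def add_nonneg_pos)
    show "\<forall>p. \<phi> p \<ge> 0" by (simp add: \<phi>_def mq_nonneg)
    show "\<forall>p\<in>\<Omega>. \<phi> p \<le> \<Phi>"
    proof
      fix p assume "p \<in> \<Omega>"
      then have "\<bar>w p\<bar> \<le> Mw" using Mw closure_subset by blast
      then have "\<bar>w p - \<epsilon>\<bar> \<le> \<bar>Mw\<bar> + \<epsilon>" using eps by linarith
      then have "\<phi> p \<le> (\<bar>Mw\<bar> + \<epsilon>)^2" unfolding \<phi>_def by (rule mq_le)
      then show "\<phi> p \<le> \<Phi>" by (simp add: \<Phi>_def)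
    qed
  qed
  obtain Cs where Cs: "Cs > 0" "\<forall>s. \<bar>dstp s\<bar> \<le> Cs" using dstp_bound by blast
  obtain L where L: "L \<ge> 2" "\<forall>p\<in>closure \<Omega>. \<bar>fst p\<bar> \<le> L - 2 \<and> \<bar>snd p\<bar> \<le> L - 2"
    using box_exists[OF bd] by blast
  define qq where "qq = Qf q1 / 2"
  have qq: "qq > 0" using Qq1 by (simp add: qq_def)
  define \<eta> where "\<eta> = min (d/8) (min (1/4) (qq * measure lborel B0 / (512 * \<Phi> * Cs * Cs)))"
  have mB0: "measure lborel B0 > 0" unfolding cB0 using h(1) by simp
  have pos: "qq * measure lborel B0 / (512 * \<Phi> * Cs * Cs) > 0"
    using qq mB0 \<Phi>(1) Cs(1) by simp
  have \<eta>: "\<eta> > 0" "\<eta> \<le> d/8" "\<eta> \<le> 1/4" "\<eta> \<le> qq * measure lborel B0 / (512 * \<Phi> * Cs * Cs)"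
    unfolding \<eta>_def using d(1) pos by simp_all
  obtain F :: "nat set" and c :: "nat \<Rightarrow> real \<times> real" and r :: "nat \<Rightarrow> real" where Fall: "finite F \<and> (\<forall>i\<in>F. r i > 0 \<and> r i \<le> 2*\<eta> \<and> c i \<in> SK)
    \<and> SK \<subseteq> (\<Union>i\<in>F. ball (c i) (r i)) \<and> (\<Sum>i\<in>F. r i) \<le> 2*\<eta>"
    using cover[OF H SKk SKcl \<eta>(1)] by (elim exE) (rule that, assumption)
  have F: "finite F" "\<forall>i\<in>F. r i > 0 \<and> r i \<le> 2*\<eta> \<and> c i \<in> SK"
    "SK \<subseteq> (\<Union>i\<in>F. ball (c i) (r i))" "(\<Sum>i\<in>F. r i) \<le> 2*\<eta>" using Fall by simp_all
  have rF: "\<forall>i\<in>F. r i > 0" using F(2) by blast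
  define \<psi> where "\<psi> = psi F c r"
  define \<psi>x where "\<psi>x = psix F c r"
  define \<psi>y where "\<psi>y = psiy F c r"
  have d\<psi>x: "hpx \<psi> (\<psi>x p) p" for p unfolding \<psi>_def \<psi>x_def by (rule psi_hpx[OF F(1) rF])
  have d\<psi>y: "hpy \<psi> (\<psi>y p) p" for p unfolding \<psi>_def \<psi>y_def by (rule psi_hpy[OF F(1) rF])
  have c\<psi>: "continuous_on UNIV \<psi>" "continuous_on UNIV \<psi>x" "continuous_on UNIV \<psi>y"
    unfolding \<psi>_def \<psi>x_def \<psi>y_def using cont_psi[OF F(1) rF] cont_psix[OF F(1) rF] cont_psiy[OF F(1) rF] by auto
  have \<psi>B0: "\<psi> p = 1" if p: "p \<in> B0" for p
  proof -
    have "\<forall>i\<in>F. dist p (c i) \<ge> 2 * r i"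
    proof
      fix i assume i: "i \<in> F"
      have ci: "c i \<in> SK" "r i \<le> 2*\<eta>" using F(2) i by auto
      then have "d \<le> dist p (c i)" using d(2) p by blast
      then show "dist p (c i) \<ge> 2 * r i" using ci(2) \<eta>(2) d(1) by linarith
    qed
    then show "\<psi> p = 1" unfolding \<psi>_def by (rule psi_one[OF F(1) rF])
  qed
  define U0 where "U0 = (\<Union>i\<in>F. ball (c i) (r i))"
  have U0: "open U0" "SK \<subseteq> U0" unfolding U0_def using F(3) by auto
  have \<psi>U0: "\<psi> p = 0 \<and> \<psi>x p = 0 \<and> \<psi>y p = 0" if pU0: "p \<in> U0" for p
  proof -
    obtain i where "i \<in> F" "dist p (c i) < r i" using pU0 unfolding U0_def by (auto simp: dist_commute)
    then show ?thesis unfolding \<psi>_def \<psi>x_def \<psi>y_def by (rule psi_zero[OF F(1) rF])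
  qed
  define Z where "Z = K - U0"
  have Zc: "closed Z" unfolding Z_def using Kc U0(1) by (simp add: closed_Diff)
  have ZU: "Z \<subseteq> U"
  proof
    fix p assume p: "p \<in> Z"
    then have "p \<in> \<Omega>" using K(2) by (auto simp: Z_def)
    moreover have "p \<notin> S"
    proof
      assume "p \<in> S"
      then have "p \<in> SK" using p by (auto simp: SK_def Z_def)
      then show False using p U0(2) by (auto simp: Z_def)
    qed
    ultimately show "p \<in> U" by (simp add: U_def)
  qed
  have V: "open (- Z)" using Zc by (simp add: open_Compl)
  have UV: "U \<union> - Z = UNIV" using ZU by auto
  have offZ: "(\<phi> p = 0 \<and> mx p = 0) \<or> (\<psi> p = 0 \<and> \<psi>x p = 0 \<and> \<psi>y p = 0)" if "p \<in> U" "p \<notin> Z" for p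
  proof (cases "p \<in> U0")
    case True then show ?thesis using \<psi>U0 by blast
  next
    case False
    then have "p \<notin> K" using that(2) by (simp add: Z_def)
    moreover have "p \<in> closure \<Omega>" using that(1) UsubO closure_subset by blast
    ultimately have "w p < \<epsilon>" by (auto simp: K_def w_def)
    then show ?thesis by (simp add: \<phi>_def mx_def mq_zero)
  qed
  have C1u: "C1_on \<Omega> u" and C1v: "C1_on \<Omega> v" using Cu Cv by (auto simp: C2_on_def)
  have d\<phi>x: "hpx \<phi> (mx p * (px u p - px v p)) p" if "p \<in> \<Omega>" for p
  proof -
    obtain x y where xy: "p = (x,y)" by (cases p)
    have du: "((\<lambda>t. u (t,y)) has_real_derivative px u (x,y)) (at x)" using C1_hpx'[OF C1u] that xy by simp
    have dv: "((\<lambda>t. v (t,y)) has_real_derivative px v (x,y)) (at x)" using C1_hpx'[OF C1v] that xy by simp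
    have "((\<lambda>t. mq (u (t,y) - v (t,y) - \<epsilon>)) has_real_derivative
        2 * max (u (x,y) - v (x,y) - \<epsilon>) 0 * (px u (x,y) - px v (x,y) - 0)) (at x)"
      by (intro DERIV_mq_chain derivative_intros du dv)
    then show ?thesis unfolding hpx_def \<phi>_def w_def mx_def xy by simp
  qed
  have d\<phi>y: "hpy \<phi> (mx p * (py u p - py v p)) p" if "p \<in> \<Omega>" for p
  proof -
    obtain x y where xy: "p = (x,y)" by (cases p)
    have du: "((\<lambda>t. u (x,t)) has_real_derivative py u (x,y)) (at y)" using C1_hpy'[OF C1u] that xy by simp
    have dv: "((\<lambda>t. v (x,t)) has_real_derivative py v (x,y)) (at y)" using C1_hpy'[OF C1v] that xy by simp
    have "((\<lambda>t. mq (u (x,t) - v (x,t) - \<epsilon>)) has_real_derivative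
        2 * max (u (x,y) - v (x,y) - \<epsilon>) 0 * (py u (x,y) - py v (x,y) - 0)) (at y)"
      by (intro DERIV_mq_chain derivative_intros du dv)
    then show ?thesis unfolding hpy_def \<phi>_def w_def mx_def xy by simp
  qed
  have Uns: "p \<in> \<Omega>" "p \<notin> Sing \<Omega> u" "p \<notin> Sing \<Omega> v" if "p \<in> U" for p
    using that by (auto simp: U_def S_def)
  have dG1: "hpx G1 (nx u p - nx v p) p" if "p \<in> U" for p
    unfolding G1_def using hpx_diff[OF N_hpx[OF Cu Uns(1,2)[OF that]] N_hpx[OF Cv Uns(1,3)[OF that]]] .
  have dG2: "hpy G2 (ny u p - ny v p) p" if "p \<in> U" for p
    unfolding G2_def using hpy_diff[OF N_hpy[OF Cu Uns(1,2)[OF that]] N_hpy[OF Cv Uns(1,3)[OF that]]] .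
  define H1x where "H1x p = \<psi>x p * \<phi> p * G1 p + \<psi> p * (mx p * (px u p - px v p)) * G1 p + \<psi> p * \<phi> p * (nx u p - nx v p)" for p
  define H2y where "H2y p = \<psi>y p * \<phi> p * G2 p + \<psi> p * (mx p * (py u p - py v p)) * G2 p + \<psi> p * \<phi> p * (ny u p - ny v p)" for p
  define H1 where "H1 p = (if p \<in> U then \<psi> p * \<phi> p * G1 p else 0)" for p
  define H2 where "H2 p = (if p \<in> U then \<psi> p * \<phi> p * G2 p else 0)" for p
  have dH1: "\<forall>p\<in>U. hpx H1 (H1x p) p"
  proof
    fix p assume p: "p \<in> U"
    have "hpx (\<lambda>q. \<psi> q * \<phi> q * G1 q) (H1x p) p"
      unfolding H1x_def by (rule hpx_mult3[OF d\<psi>x d\<phi>x[OF Uns(1)[OF p]] dG1[OF p]])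
    then show "hpx H1 (H1x p) p" unfolding H1_def[abs_def] by (rule hpx_open_if[OF opU p])
  qed
  have dH2: "\<forall>p\<in>U. hpy H2 (H2y p) p"
  proof
    fix p assume p: "p \<in> U"
    have "hpy (\<lambda>q. \<psi> q * \<phi> q * G2 q) (H2y p) p"
      unfolding H2y_def by (rule hpy_mult3[OF d\<psi>y d\<phi>y[OF Uns(1)[OF p]] dG2[OF p]])
    then show "hpy H2 (H2y p) p" unfolding H2_def[abs_def] by (rule hpy_open_if[OF opU p])
  qed
  have c\<psi>U: "continuous_on U \<psi>" "continuous_on U \<psi>x" "continuous_on U \<psi>y"
    using c\<psi> by (auto intro: continuous_on_subset)
  have cn: "continuous_on U (nx u)" "continuous_on U (nx v)" "continuous_on U (ny u)" "continuous_on U (ny v)"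
    using nx_cont[OF Cu] nx_cont[OF Cv] ny_cont[OF Cu] ny_cont[OF Cv] unfolding U_eq
    by (auto intro: continuous_on_subset)
  have c\<phi>: "continuous_on U \<phi>" "continuous_on U mx"
    unfolding \<phi>_def[abs_def] mx_def[abs_def] w_def by (intro continuous_intros contU)+
  have cH1x: "continuous_on U H1x" unfolding H1x_def[abs_def]
    by (intro continuous_intros c\<psi>U c\<phi> contG contU cn)
  have cH2y: "continuous_on U H2y" unfolding H2y_def[abs_def]
    by (intro continuous_intros c\<psi>U c\<phi> contG contU cn)
  have H1z: "\<forall>p\<in>-Z. H1 p = 0" using offZ by (auto simp: H1_def)
  have H2z: "\<forall>p\<in>-Z. H2 p = 0" using offZ by (auto simp: H2_def)
  note g1 = glue_hpx[OF opU V UV H1z dH1 cH1x]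
  note g2 = glue_hpy[OF opU V UV H2z dH2 cH2y]
  have notU: "p \<notin> U" if "\<bar>fst p\<bar> = L \<or> \<bar>snd p\<bar> = L" for p
  proof
    assume "p \<in> U"
    then have "p \<in> closure \<Omega>" using UsubO closure_subset by blast
    then show False using L that by force
  qed
  define R where "R = cbox (-L,-L) (L,L)"
  have I1: "integral R (\<lambda>p. if p \<in> U then H1x p else 0) = 0"
    unfolding R_def by (rule int_px_zero[OF g1]) (use notU L in \<open>auto simp: H1_def\<close>)
  have I2: "integral R (\<lambda>p. if p \<in> U then H2y p else 0) = 0"
    unfolding R_def by (rule int_py_zero[OF g2]) (use notU L in \<open>auto simp: H2_def\<close>)
  define D where "D p = (if p \<in> U then H1x p else 0) + (if p \<in> U then H2y p else 0)" for p
  have RC: "f integrable_on R" if "continuous_on UNIV f" for f :: "real \<times> real \<Rightarrow> real"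
    unfolding R_def by (rule integrable_continuous, rule continuous_on_subset[OF that]) simp
  have cD: "continuous_on UNIV D" unfolding D_def[abs_def] using g1(2) g2(2) by (intro continuous_intros)
  have ID: "integral R D = 0"
    unfolding D_def using I1 I2 integral_add[OF RC[OF g1(2)] RC[OF g2(2)]] by simp
  define P2 where "P2 p = (if p \<in> U then \<psi> p * Qf p else 0)" for p
  define P3 where "P3 p = (if p \<in> U then \<phi> p * (\<psi>x p * G1 p + \<psi>y p * G2 p) else 0)" for p
  have cQU: "continuous_on U (\<lambda>p. \<psi> p * Qf p)" by (intro continuous_intros c\<psi>U contQ)
  have cP2: "continuous_on UNIV P2"
  proof (rule glue_cont[OF opU V UV])
    show "continuous_on U P2" using continuous_on_cong[of U U P2 "\<lambda>p. \<psi> p * Qf p"] cQU by (simp add: P2_def)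
    show "\<forall>p\<in>- Z. P2 p = 0" using offZ by (auto simp: P2_def Qf_def)
  qed
  have cP3U: "continuous_on U (\<lambda>p. \<phi> p * (\<psi>x p * G1 p + \<psi>y p * G2 p))"
    by (intro continuous_intros c\<psi>U c\<phi> contG)
  have cP3: "continuous_on UNIV P3"
  proof (rule glue_cont[OF opU V UV])
    show "continuous_on U P3" using continuous_on_cong[of U U P3] cP3U by (simp add: P3_def)
    show "\<forall>p\<in>- Z. P3 p = 0"
    proof
      fix p assume p: "p \<in> - Z"
      show "P3 p = 0"
      proof (cases "p \<in> U")
        case True
        then have "\<phi> p = 0 \<or> (\<psi>x p = 0 \<and> \<psi>y p = 0)" using offZ p by blast
        then show ?thesis using True by (auto simp: P3_def)
      qed (simp add: P3_def)
    qed
  qed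
  have DP: "P2 p + P3 p \<le> D p" for p
  proof (cases "p \<in> U")
    case True
    have ns: "p \<in> \<Omega>" "p \<notin> Sing \<Omega> u" "p \<notin> Sing \<Omega> v" using Uns[OF True] by auto
    have du: "div2 (Nfield u) p = nx u p + ny u p"
      unfolding div2_def using hpx_px[OF N_hpx[OF Cu ns(1,2)]] hpy_py[OF N_hpy[OF Cu ns(1,2)]] by simp
    have dv: "div2 (Nfield v) p = nx v p + ny v p"
      unfolding div2_def using hpx_px[OF N_hpx[OF Cv ns(1,3)]] hpy_py[OF N_hpy[OF Cv ns(1,3)]] by simp
    have "div2 (Nfield u) p \<ge> div2 (Nfield v) p" using divh True by (auto simp: U_def S_def)
    then have dd: "(nx u p - nx v p) + (ny u p - ny v p) \<ge> 0" using du dv by simp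
    have "0 \<le> \<psi> p" unfolding \<psi>_def by (rule psi_range(1)[OF F(1) rF])
    moreover have "0 \<le> \<phi> p" using \<Phi>(3) by blast
    ultimately have \<psi>\<phi>: "\<psi> p * \<phi> p \<ge> 0" by simp
    have "D p - (P2 p + P3 p) = \<psi> p * \<phi> p * ((nx u p - nx v p) + (ny u p - ny v p))"
      using True by (simp add: D_def P2_def P3_def H1x_def H2y_def Qf_def algebra_simps)
    also have "\<dots> \<ge> 0" using \<psi>\<phi> dd by simp
    finally show ?thesis by simp
  qed (simp add: D_def P2_def P3_def)
  have "integral R (\<lambda>p. P2 p + P3 p) \<le> integral R D"
    by (rule integral_le) (use RC[OF cP2] RC[OF cP3] RC[OF cD] DP in \<open>auto intro: integrable_add\<close>)
  then have sum23: "integral R P2 + integral R P3 \<le> 0"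
    using ID integral_add[OF RC[OF cP2] RC[OF cP3]] by simp
  have B0R: "B0 \<subseteq> R"
  proof
    fix p assume "p \<in> B0"
    then have "p \<in> closure \<Omega>" using B0(2) UsubO closure_subset by blast
    then have "\<bar>fst p\<bar> \<le> L - 2" "\<bar>snd p\<bar> \<le> L - 2" using L by auto
    then show "p \<in> R" unfolding R_def by (cases p) (auto simp: cbox_Pair_iff abs_le_iff)
  qed
  have P2nn: "\<forall>p. P2 p \<ge> 0"
  proof
    fix p
    have "0 \<le> \<psi> p" unfolding \<psi>_def by (rule psi_range(1)[OF F(1) rF])
    then show "P2 p \<ge> 0" using Qnn[of p] by (simp add: P2_def)
  qed
  have cB0': "continuous_on UNIV P2 \<Longrightarrow> P2 integrable_on B0"
    unfolding B0_def by (rule integrable_continuous) (auto intro: continuous_on_subset)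
  have "integral B0 (\<lambda>p. qq) \<le> integral B0 P2"
  proof (rule integral_le)
    show "(\<lambda>p. qq) integrable_on B0" unfolding B0_def by (rule integrable_continuous) (rule continuous_on_const)
    show "P2 integrable_on B0" by (rule cB0'[OF cP2])
    fix p assume p: "p \<in> B0"
    have "p \<in> U" using p B0(2) by blast
    then show "qq \<le> P2 p" using \<psi>B0[OF p] B0(3) p by (simp add: P2_def qq_def)
  qed
  also have "\<dots> \<le> integral R P2"
    by (rule integral_subset_le[OF B0R cB0'[OF cP2] RC[OF cP2]]) (use P2nn in auto)
  finally have IP2: "qq * measure lborel B0 \<le> integral R P2" unfolding B0_def by (simp add: mult.commute)
  define E where "E p = 2 * \<Phi> * Cs * (\<Sum>i\<in>F. \<bar>bxx (c i) (r i) p\<bar> + \<bar>byy (c i) (r i) p\<bar>)" for p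
  have cE: "continuous_on UNIV E" unfolding E_def[abs_def]
    by (intro continuous_intros continuous_on_sum) (use cont_bxx cont_byy rF in auto)
  have P3E: "- E p \<le> P3 p" for p
  proof (cases "p \<in> U")
    case True
    have \<phi>b: "0 \<le> \<phi> p" "\<phi> p \<le> \<Phi>" using \<Phi>(2,3) UsubO True by blast+
    have Gb: "\<bar>G1 p\<bar> \<le> 2" "\<bar>G2 p\<bar> \<le> 2" unfolding G1_def G2_def
      using N_bound[of u p] N_bound[of v p] by linarith+
    have bx: "\<bar>\<psi>x p\<bar> \<le> Cs * (\<Sum>i\<in>F. \<bar>bxx (c i) (r i) p\<bar>)" unfolding \<psi>x_def by (rule psix_bound[OF F(1) rF Cs(2)])
    have by': "\<bar>\<psi>y p\<bar> \<le> Cs * (\<Sum>i\<in>F. \<bar>byy (c i) (r i) p\<bar>)" unfolding \<psi>y_def by (rule psiy_bound[OF F(1) rF Cs(2)])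
    have "\<bar>\<psi>x p * G1 p + \<psi>y p * G2 p\<bar> \<le> \<bar>\<psi>x p\<bar> * 2 + \<bar>\<psi>y p\<bar> * 2"
    proof -
      have "\<bar>\<psi>x p * G1 p\<bar> \<le> \<bar>\<psi>x p\<bar> * 2" unfolding abs_mult by (rule mult_left_mono[OF Gb(1)]) simp
      moreover have "\<bar>\<psi>y p * G2 p\<bar> \<le> \<bar>\<psi>y p\<bar> * 2" unfolding abs_mult by (rule mult_left_mono[OF Gb(2)]) simp
      ultimately show ?thesis by linarith
    qed
    also have "\<dots> \<le> 2 * Cs * ((\<Sum>i\<in>F. \<bar>bxx (c i) (r i) p\<bar>) + (\<Sum>i\<in>F. \<bar>byy (c i) (r i) p\<bar>))"
      using bx by' by (simp add: algebra_simps)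
    finally have b1: "\<bar>\<psi>x p * G1 p + \<psi>y p * G2 p\<bar> \<le> 2 * Cs * ((\<Sum>i\<in>F. \<bar>bxx (c i) (r i) p\<bar>) + (\<Sum>i\<in>F. \<bar>byy (c i) (r i) p\<bar>))" .
    have "\<bar>P3 p\<bar> = \<phi> p * \<bar>\<psi>x p * G1 p + \<psi>y p * G2 p\<bar>" using True \<phi>b by (simp add: P3_def abs_mult)
    also have "\<dots> \<le> \<Phi> * (2 * Cs * ((\<Sum>i\<in>F. \<bar>bxx (c i) (r i) p\<bar>) + (\<Sum>i\<in>F. \<bar>byy (c i) (r i) p\<bar>)))"
      by (rule mult_mono[OF \<phi>b(2) b1]) (use \<Phi>(1) in auto)
    also have "\<dots> = E p" by (simp add: E_def sum.distrib algebra_simps)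
    finally show ?thesis by linarith
  next
    case False
    have "E p \<ge> 0" unfolding E_def using \<Phi>(1) Cs(1) by (intro mult_nonneg_nonneg sum_nonneg) auto
    then show ?thesis using False by (simp add: P3_def)
  qed
  have "integral R (\<lambda>p. - E p) \<le> integral R P3"
    by (rule integral_le[OF RC[OF continuous_on_minus[OF cE]] RC[OF cP3]]) (rule P3E)
  then have IP3: "- integral R E \<le> integral R P3" by simp
  have sqR: "sqbox (c i) (r i) \<subseteq> R" if i: "i \<in> F" for i
  proof -
    have ci: "c i \<in> closure \<Omega>" "r i \<le> 2 * \<eta>" using F(2) i K(2) closure_subset by (auto simp: SK_def)
    then have "\<bar>fst (c i)\<bar> \<le> L - 2" "\<bar>snd (c i)\<bar> \<le> L - 2" using L by auto
    moreover have "2 * r i \<le> 1" using ci(2) \<eta>(3) by linarith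
    ultimately show ?thesis unfolding sqbox_def R_def by (auto simp: cbox_Pair_eq abs_le_iff)
  qed
  have ib: "integral R (\<lambda>p. \<bar>bxx (c i) (r i) p\<bar> + \<bar>byy (c i) (r i) p\<bar>) \<le> 64 * Cs * r i" if i: "i \<in> F" for i
  proof -
    have ca: "continuous_on UNIV (\<lambda>p. \<bar>bxx (c i) (r i) p\<bar>)" "continuous_on UNIV (\<lambda>p. \<bar>byy (c i) (r i) p\<bar>)"
      using cont_bxx[of "r i" "c i"] cont_byy[of "r i" "c i"] rF i by (auto intro!: continuous_intros)
    have "integral R (\<lambda>p. \<bar>bxx (c i) (r i) p\<bar> + \<bar>byy (c i) (r i) p\<bar>)
        = integral R (\<lambda>p. \<bar>bxx (c i) (r i) p\<bar>) + integral R (\<lambda>p. \<bar>byy (c i) (r i) p\<bar>)"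
      by (rule integral_add[OF RC[OF ca(1)] RC[OF ca(2)]])
    also have "\<dots> \<le> 32 * Cs * r i + 32 * Cs * r i"
      using int_bxx[of "r i" Cs "c i" "(-L,-L)" "(L,L)"] int_byy[of "r i" Cs "c i" "(-L,-L)" "(L,L)"]
        rF i Cs(2) sqR[OF i] unfolding R_def by (intro add_mono) auto
    finally show ?thesis by simp
  qed
  have IE: "integral R E \<le> 2 * \<Phi> * Cs * (\<Sum>i\<in>F. 64 * Cs * r i)"
  proof -
    have ca: "continuous_on UNIV (\<lambda>p. \<bar>bxx (c i) (r i) p\<bar> + \<bar>byy (c i) (r i) p\<bar>)" if "i \<in> F" for i
      using cont_bxx[of "r i" "c i"] cont_byy[of "r i" "c i"] rF that by (auto intro!: continuous_intros)
    have "integral R E = 2 * \<Phi> * Cs * integral R (\<lambda>p. \<Sum>i\<in>F. \<bar>bxx (c i) (r i) p\<bar> + \<bar>byy (c i) (r i) p\<bar>)"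
      unfolding E_def by simp
    also have "integral R (\<lambda>p. \<Sum>i\<in>F. \<bar>bxx (c i) (r i) p\<bar> + \<bar>byy (c i) (r i) p\<bar>)
       = (\<Sum>i\<in>F. integral R (\<lambda>p. \<bar>bxx (c i) (r i) p\<bar> + \<bar>byy (c i) (r i) p\<bar>))"
      by (rule integral_sum[OF F(1)]) (use RC ca in blast)
    also have "\<dots> \<le> (\<Sum>i\<in>F. 64 * Cs * r i)" by (rule sum_mono) (rule ib)
    finally show ?thesis using \<Phi>(1) Cs(1) by (simp add: mult_left_mono)
  qed
  have "(\<Sum>i\<in>F. 64 * Cs * r i) = 64 * Cs * (\<Sum>i\<in>F. r i)" by (simp add: sum_distrib_left)
  also have "\<dots> \<le> 64 * Cs * (2 * \<eta>)" using F(4) Cs(1) by simp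
  finally have "2 * \<Phi> * Cs * (\<Sum>i\<in>F. 64 * Cs * r i) \<le> 2 * \<Phi> * Cs * (64 * Cs * (2 * \<eta>))"
    using \<Phi>(1) Cs(1) by (simp add: mult_left_mono)
  also have "\<dots> = 256 * \<Phi> * Cs * Cs * \<eta>" by simp
  also have "\<dots> \<le> 256 * \<Phi> * Cs * Cs * (qq * measure lborel B0 / (512 * \<Phi> * Cs * Cs))"
    using \<eta>(4) \<Phi>(1) Cs(1) by (intro mult_left_mono) auto
  also have "\<dots> = qq * measure lborel B0 / 2" using \<Phi>(1) Cs(1) by (simp add: field_simps)
  finally have "integral R E \<le> qq * measure lborel B0 / 2" using IE by linarith
  moreover have "qq * measure lborel B0 > 0" using qq mB0 by simp
  ultimately show False using IP2 IP3 sum23 by linarith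
qed



lemma N_eq_cross:
  assumes "p \<in> \<Omega>" "p \<notin> Sing \<Omega> u" "p \<notin> Sing \<Omega> v" "Nfield u p = Nfield v p"
  shows "Aw u p * Bw v p - Aw v p * Bw u p = 0"
proof -
  define ra where "ra = sqrt (Aw u p ^2 + Bw u p ^2)"
  define rb where "rb = sqrt (Aw v p ^2 + Bw v p ^2)"
  have ra: "ra > 0" using nonsing_pos[OF assms(1,2)] by (simp add: ra_def)
  have rb: "rb > 0" using nonsing_pos[OF assms(1,3)] by (simp add: rb_def)
  have f: "fst (Nfield u p) = fst (Nfield v p)" "snd (Nfield u p) = snd (Nfield v p)" using assms(4) by simp_all
  have e: "Aw u p / ra = Aw v p / rb" "Bw u p / ra = Bw v p / rb"
    using f unfolding Nfield_fst Nfield_snd ra_def rb_def by (simp_all add: add.commute)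
  have a: "Aw u p = ra * (Aw v p / rb)" "Bw u p = ra * (Bw v p / rb)"
    using e ra by (simp_all add: field_simps)
  show ?thesis unfolding a using rb by (simp add: field_simps)
qed

theorem theoremC:
  fixes \<Omega> :: "(real \<times> real) set" and u v :: "real \<times> real \<Rightarrow> real"
  assumes "open \<Omega>" and "connected \<Omega>" and "bounded \<Omega>"
    and "C2_on \<Omega> u" and "C2_on \<Omega> v"
    and "continuous_on (closure \<Omega>) u" and "continuous_on (closure \<Omega>) v"
    and "\<forall>p \<in> \<Omega> - (Sing \<Omega> u \<union> Sing \<Omega> v). div2 (Nfield u) p \<ge> div2 (Nfield v) p"
    and "\<forall>p \<in> frontier \<Omega>. u p \<le> v p"
    and "hausdorff1 (closure (Sing \<Omega> u \<union> Sing \<Omega> v)) = 0"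
  shows "\<forall>p \<in> \<Omega>. u p \<le> v p"
proof (rule ccontr)
  assume "\<not> (\<forall>p \<in> \<Omega>. u p \<le> v p)"
  then obtain p0 where p0: "p0 \<in> \<Omega>" "u p0 > v p0" by auto
  have cpt: "compact (closure \<Omega>)" using assms(3) by (simp add: compact_eq_bounded_closed bounded_closure)
  have ne: "closure \<Omega> \<noteq> {}" using p0(1) closure_subset by blast
  have cw: "continuous_on (closure \<Omega>) (\<lambda>p. u p - v p)" using assms(6,7) by (intro continuous_intros)
  obtain pm where pm: "pm \<in> closure \<Omega>" "\<forall>y\<in>closure \<Omega>. u y - v y \<le> u pm - v pm"
    using continuous_attains_sup[OF cpt ne cw] by blast
  have "u p0 - v p0 \<le> u pm - v pm" using pm(2) p0(1) closure_subset by blast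
  then have Mpos: "u pm - v pm > 0" using p0(2) by linarith
  have pmO: "pm \<in> \<Omega>"
  proof (rule ccontr)
    assume "pm \<notin> \<Omega>"
    then have "pm \<in> frontier \<Omega>" using pm(1) unfolding frontier_def interior_open[OF assms(1)] by blast
    then have "u pm \<le> v pm" using assms(9) by blast
    then show False using Mpos by linarith
  qed
  define \<epsilon> where "\<epsilon> = (u pm - v pm) / 2"
  have eps: "\<epsilon> > 0" "u pm - v pm > \<epsilon>" using Mpos by (auto simp: \<epsilon>_def)
  have NN: "Nfield u q = Nfield v q" if "q \<in> \<Omega>" "q \<notin> Sing \<Omega> u \<union> Sing \<Omega> v" "u q - v q > \<epsilon>" for q
  proof (rule ccontr)
    assume "Nfield u q \<noteq> Nfield v q"
    from part1[OF assms(1,3,4,5,6,7,8,9,10) eps(1) that this] show False .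
  qed
  have cross: "\<forall>p\<in>\<Omega>. u p - v p > \<epsilon> \<longrightarrow> Aw u p * Bw v p - Aw v p * Bw u p = 0"
  proof (intro ballI impI)
    fix p assume p: "p \<in> \<Omega>" "u p - v p > \<epsilon>"
    show "Aw u p * Bw v p - Aw v p * Bw u p = 0"
    proof (cases "p \<in> Sing \<Omega> u")
      case True then show ?thesis by (simp add: Sing_iff)
    next
      case nu: False
      show ?thesis
      proof (cases "p \<in> Sing \<Omega> v")
        case True then show ?thesis by (simp add: Sing_iff)
      next
        case False
        then show ?thesis using N_eq_cross[OF p(1) nu False NN[OF p(1) _ p(2)]] nu by blast
      qed
    qed
  qed
  show False by (rule part2[OF assms(1,3,4,5,6,7,9) eps(1) pmO eps(2) cross])
qed

end
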